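(* Let $N\ge 1$ and let $T:M(N)\to M(N)$ be a non-zero linear map, and let $T^*$ be its adjoint with respect to the Hilbert–Schmidt inner product $\langle A,B\rangle_{\mathrm{HS}}=\operatorname{tr}(A^*B)$. Then $h(T)=h(T^* )$.
   Context: $M(N)$ is the space of $N\times N$ complex matrices. For $1\le p<\infty$, $\|A\|_p$ is the Schatten-$p$ norm $(\sum_i\sigma_i(A)^p)^{1/p}$ and $\|A\|_\infty$ is the operator norm; $\|T\|_{p\to p}=\sup_{X\ne0}\|T(X)\|_p/\|X\|_p$. The height of a non-zero linear map $T:M(N)\to M(N)$ is $h(T)=\sqrt{\|T\|_{1\to1}\|T\|_{\infty\to\infty}}/\|T\|_{2\to2}$. *)

theory Defs
  imports "Jordan_Normal_Form.Schur_Decomposition" "Jordan_Normal_Form.Char_Poly"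
    "HOL-Computational_Algebra.Fundamental_Theorem_Algebra"
begin

text \<open>Matrices in M(N) are complex matrices in carrier_mat N N.
  A^* is mat_adjoint A (conjugate transpose).\<close>

definition singular_values :: "complex mat \<Rightarrow> real multiset" where
  "singular_values A = image_mset (\<lambda>z. sqrt (Re z)) (proots (char_poly (mat_adjoint A * A)))"

definition schatten_norm :: "real \<Rightarrow> complex mat \<Rightarrow> real" where
  "schatten_norm p A = (\<Sum>s\<in>#singular_values A. s powr p) powr (1 / p)"

definition vec_norm2 :: "complex vec \<Rightarrow> real" where
  "vec_norm2 x = sqrt (\<Sum>i<dim_vec x. (cmod (x $ i))\<^sup>2)"

definition op_norm :: "complex mat \<Rightarrow> real" where
  "op_norm A = Sup {vec_norm2 (A *\<^sub>v x) / vec_norm2 x | x. x \<in> carrier_vec (dim_col A) \<and> x \<noteq> 0\<^sub>v (dim_col A)}"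

definition induced_norm :: "nat \<Rightarrow> (complex mat \<Rightarrow> real) \<Rightarrow> (complex mat \<Rightarrow> complex mat) \<Rightarrow> real" where
  "induced_norm N nrm T = Sup {nrm (T X) / nrm X | X. X \<in> carrier_mat N N \<and> X \<noteq> 0\<^sub>m N N}"

definition height :: "nat \<Rightarrow> (complex mat \<Rightarrow> complex mat) \<Rightarrow> real" where
  "height N T = sqrt (induced_norm N (schatten_norm 1) T * induced_norm N op_norm T)
                 / induced_norm N (schatten_norm 2) T"

definition mat_trace :: "complex mat \<Rightarrow> complex" where
  "mat_trace A = (\<Sum>i<dim_row A. A $$ (i, i))"

definition hs_inner :: "complex mat \<Rightarrow> complex mat \<Rightarrow> complex" where
  "hs_inner A B = mat_trace (mat_adjoint A * B)"

definition linear_on_M :: "nat \<Rightarrow> (complex mat \<Rightarrow> complex mat) \<Rightarrow> bool" where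
  "linear_on_M N T \<longleftrightarrow>
     (\<forall>A\<in>carrier_mat N N. T A \<in> carrier_mat N N) \<and>
     (\<forall>A\<in>carrier_mat N N. \<forall>B\<in>carrier_mat N N. T (A + B) = T A + T B) \<and>
     (\<forall>c. \<forall>A\<in>carrier_mat N N. T (c \<cdot>\<^sub>m A) = c \<cdot>\<^sub>m T A)"

definition is_hs_adjoint :: "nat \<Rightarrow> (complex mat \<Rightarrow> complex mat) \<Rightarrow> (complex mat \<Rightarrow> complex mat) \<Rightarrow> bool" where
  "is_hs_adjoint N T S \<longleftrightarrow>
     (\<forall>A\<in>carrier_mat N N. S A \<in> carrier_mat N N) \<and>
     (\<forall>A\<in>carrier_mat N N. \<forall>B\<in>carrier_mat N N. hs_inner A (T B) = hs_inner (S A) B)"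

end

theory Submission
  imports Defs
begin
abbreviation adj :: "complex mat \<Rightarrow> complex mat" where "adj \<equiv> mat_adjoint"

lemma adj_dims[simp]: "dim_row (adj A) = dim_col A" "dim_col (adj A) = dim_row A"
  unfolding mat_adjoint_def by (auto simp: mat_of_rows_def)

lemma adj_carrier[simp,intro]: assumes "A \<in> carrier_mat n m" shows "adj A \<in> carrier_mat m n"
  using assms unfolding carrier_mat_def by simp

lemma adj_index[simp]: "i < dim_col A \<Longrightarrow> j < dim_row A \<Longrightarrow> adj A $$ (i,j) = cnj (A $$ (j,i))"
  unfolding mat_adjoint_def by (subst mat_of_rows_index) auto

lemma mult_index_sum: "A \<in> carrier_mat n k \<Longrightarrow> B \<in> carrier_mat k m \<Longrightarrow> i < n \<Longrightarrow> j < m \<Longrightarrow>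
  (A * B) $$ (i,j) = (\<Sum>l<k. A $$ (i,l) * B $$ (l,j))"
  by (auto simp: scalar_prod_def lessThan_atLeast0 intro!: sum.cong)

lemma adj_adj[simp]: "adj (adj A) = A"
  by (rule eq_matI) auto

lemma adj_mult: assumes "A \<in> carrier_mat n k" "B \<in> carrier_mat k m"
  shows "adj (A * B) = adj B * adj A"
proof (rule eq_matI)
  fix i j assume ij: "i < dim_row (adj B * adj A)" "j < dim_col (adj B * adj A)"
  then have i: "i < m" and j: "j < n" using assms by auto
  have "adj (A*B) $$ (i,j) = cnj ((A*B) $$ (j,i))" using i j assms by simp
  also have "\<dots> = (\<Sum>l<k. cnj (A $$ (j,l)) * cnj (B $$ (l,i)))"
    using i j assms by (subst mult_index_sum[of _ n k _ m]) (auto simp: cnj_sum)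
  also have "\<dots> = (adj B * adj A) $$ (i,j)"
    using i j assms by (subst mult_index_sum[of _ m k _ n]) (auto simp: mult.commute)
  finally show "adj (A*B) $$ (i,j) = (adj B * adj A) $$ (i,j)" .
qed (use assms in auto)

lemma hs_inner_sum: assumes "A \<in> carrier_mat N N" "B \<in> carrier_mat N N"
  shows "hs_inner A B = (\<Sum>i<N. \<Sum>k<N. cnj (A $$ (k,i)) * B $$ (k,i))"
  unfolding hs_inner_def mat_trace_def using assms
  by (simp add: scalar_prod_def atLeast0LessThan)

lemma hs_inner_conj: assumes "A \<in> carrier_mat N N" "B \<in> carrier_mat N N"
  shows "hs_inner B A = cnj (hs_inner A B)"
  using assms by (simp add: hs_inner_sum cnj_sum mult.commute)

lemma hs_inner_cmod_sym: assumes "A \<in> carrier_mat N N" "B \<in> carrier_mat N N"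
  shows "cmod (hs_inner B A) = cmod (hs_inner A B)"
  using hs_inner_conj[OF assms] by simp

lemma hs_inner_zero_left: "B \<in> carrier_mat N N \<Longrightarrow> hs_inner (0\<^sub>m N N) B = 0"
  by (subst hs_inner_sum[of _ N]) auto

lemma cnj_mult_self: "cnj z * z = complex_of_real ((cmod z)\<^sup>2)"
  using complex_norm_square[of z] by (simp add: mult.commute)

lemma hs_inner_le: assumes "A \<in> carrier_mat N N" "B \<in> carrier_mat N N"
  shows "cmod (hs_inner A B) \<le> (\<Sum>i<N. \<Sum>k<N. cmod (A $$ (k,i)) * cmod (B $$ (k,i)))"
proof -
  have "cmod (hs_inner A B) \<le> (\<Sum>i<N. cmod (\<Sum>k<N. cnj (A $$ (k,i)) * B $$ (k,i)))"
    unfolding hs_inner_sum[OF assms] by (rule norm_sum)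
  also have "\<dots> \<le> (\<Sum>i<N. \<Sum>k<N. cmod (A $$ (k,i)) * cmod (B $$ (k,i)))"
    by (intro sum_mono order.trans[OF norm_sum]) (simp add: norm_mult)
  finally show ?thesis .
qed

lemma hs_inner_self: assumes "A \<in> carrier_mat N N"
  shows "hs_inner A A = of_real (\<Sum>i<N. \<Sum>k<N. (cmod (A $$ (k,i)))\<^sup>2)"
  unfolding hs_inner_sum[OF assms assms]
  by (simp add: cnj_mult_self)

lemma hs_inner_self_pos: assumes "A \<in> carrier_mat N N" "A \<noteq> 0\<^sub>m N N"
  shows "0 < cmod (hs_inner A A)"
proof -
  obtain k i where ki: "k < N" "i < N" "A $$ (k,i) \<noteq> 0"
    using assms by (metis carrier_matD eq_matI index_zero_mat(1) zero_carrier_mat carrier_matD)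
  have pos: "0 < (\<Sum>k<N. (cmod (A $$ (k,i)))\<^sup>2)"
    by (rule sum_pos2[of _ k]) (use ki in auto)
  have "0 < (\<Sum>i'<N. \<Sum>k<N. (cmod (A $$ (k,i')))\<^sup>2)"
    apply (rule sum_pos2[of "{..<N}" i])
    using ki pos by (auto intro: sum_nonneg)
  then show ?thesis unfolding hs_inner_self[OF assms(1)] norm_of_real by linarith
qed

definition Emat :: "nat \<Rightarrow> nat \<Rightarrow> nat \<Rightarrow> complex mat" where
  "Emat N a b = mat N N (\<lambda>(k,l). if k = a \<and> l = b then 1 else 0)"

lemma Emat_carrier[simp]: "Emat N a b \<in> carrier_mat N N"
  by (simp add: Emat_def)

lemma hs_inner_Emat: assumes "Y \<in> carrier_mat N N" "a < N" "b < N"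
  shows "hs_inner (Emat N a b) Y = Y $$ (a,b)"
proof -
  have "hs_inner (Emat N a b) Y = (\<Sum>i<N. \<Sum>k<N. if k = a \<and> i = b then Y $$ (a,b) else 0)"
    using assms unfolding hs_inner_sum[OF Emat_carrier assms(1)]
    by (intro sum.cong refl) (auto simp: Emat_def)
  also have "\<dots> = (\<Sum>i<N. if i = b then Y $$ (a,b) else 0)"
    using assms by (intro sum.cong refl) auto
  also have "\<dots> = Y $$ (a,b)" using assms by simp
  finally show ?thesis .
qed

lemma entry_le_norm:
  fixes n1 n2 :: "complex mat \<Rightarrow> real"
  assumes H: "\<And>A B. A \<in> carrier_mat N N \<Longrightarrow> B \<in> carrier_mat N N \<Longrightarrow> cmod (hs_inner A B) \<le> n1 A * n2 B"
    and Y: "Y \<in> carrier_mat N N" and ab: "a < N" "b < N"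
  shows "cmod (Y $$ (a,b)) \<le> n1 (Emat N a b) * n2 Y"
  using H[OF Emat_carrier Y, of a b] hs_inner_Emat[OF Y ab] by simp

lemma norm_bound_entries:
  fixes n1 n2 :: "complex mat \<Rightarrow> real"
  assumes nn1: "\<And>X. X \<in> carrier_mat N N \<Longrightarrow> 0 \<le> n1 X"
    and H: "\<And>A B. A \<in> carrier_mat N N \<Longrightarrow> B \<in> carrier_mat N N \<Longrightarrow> cmod (hs_inner A B) \<le> n1 A * n2 B"
    and At: "\<And>X. X \<in> carrier_mat N N \<Longrightarrow> \<exists>B\<in>carrier_mat N N. n2 B \<le> 1 \<and> n1 X \<le> cmod (hs_inner B X)"
    and Y: "Y \<in> carrier_mat N N"
  shows "n1 Y \<le> (\<Sum>i<N. \<Sum>k<N. n1 (Emat N k i) * cmod (Y $$ (k,i)))"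
proof -
  obtain B where B: "B \<in> carrier_mat N N" "n2 B \<le> 1" "n1 Y \<le> cmod (hs_inner B Y)"
    using At[OF Y] by blast
  have "n1 Y \<le> (\<Sum>i<N. \<Sum>k<N. cmod (B $$ (k,i)) * cmod (Y $$ (k,i)))"
    using B(3) hs_inner_le[OF B(1) Y] by linarith
  also have "\<dots> \<le> (\<Sum>i<N. \<Sum>k<N. n1 (Emat N k i) * cmod (Y $$ (k,i)))"
  proof (intro sum_mono mult_right_mono)
    fix i k assume "i \<in> {..<N}" "k \<in> {..<N}"
    then have "cmod (B $$ (k,i)) \<le> n1 (Emat N k i) * n2 B"
      using entry_le_norm[of N n1 n2, OF H B(1)] by auto
    also have "\<dots> \<le> n1 (Emat N k i)"
      using B(2) nn1[OF Emat_carrier] by (simp add: mult_left_le)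
    finally show "cmod (B $$ (k,i)) \<le> n1 (Emat N k i)" .
  qed simp
  finally show ?thesis .
qed

lemma one_neq_zero_mat: assumes N: "N \<ge> 1" shows "1\<^sub>m N \<noteq> (0\<^sub>m N N :: complex mat)"
proof
  assume "1\<^sub>m N = (0\<^sub>m N N :: complex mat)"
  then have "(1\<^sub>m N :: complex mat) $$ (0,0) = (0\<^sub>m N N :: complex mat) $$ (0,0)" by simp
  then show False using N by simp
qed

lemma ratio_set_bdd:
  fixes n :: "complex mat \<Rightarrow> real" and S :: "complex mat \<Rightarrow> complex mat"
  assumes nn: "\<And>X. X \<in> carrier_mat N N \<Longrightarrow> 0 \<le> n X"
    and K: "\<And>X. X \<in> carrier_mat N N \<Longrightarrow> n (S X) \<le> K * n X" and K0: "0 \<le> K"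
  shows "bdd_above {n (S X) / n X | X. X \<in> carrier_mat N N \<and> X \<noteq> 0\<^sub>m N N}"
proof (rule bdd_aboveI[of _ K], clarify)
  fix X :: "complex mat" assume X: "X \<in> carrier_mat N N"
  show "n (S X) / n X \<le> K"
  proof (cases "n X = 0")
    case True then show ?thesis using K0 by simp
  next
    case False
    then have "0 < n X" using nn[OF X] by simp
    then show ?thesis using K[OF X] by (simp add: divide_le_eq)
  qed
qed

lemma ratio_set_nonneg:
  fixes n :: "complex mat \<Rightarrow> real" and S :: "complex mat \<Rightarrow> complex mat"
  assumes nn: "\<And>X. X \<in> carrier_mat N N \<Longrightarrow> 0 \<le> n X"
   and S: "\<And>X. X \<in> carrier_mat N N \<Longrightarrow> S X \<in> carrier_mat N N"
   and N: "N \<ge> 1"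
   and bdd: "bdd_above {n (S X) / n X | X. X \<in> carrier_mat N N \<and> X \<noteq> 0\<^sub>m N N}"
  shows "0 \<le> Sup {n (S X) / n X | X. X \<in> carrier_mat N N \<and> X \<noteq> 0\<^sub>m N N}"
proof -
  have "1\<^sub>m N \<noteq> (0\<^sub>m N N :: complex mat)" by (rule one_neq_zero_mat[OF N])
  then have mem: "n (S (1\<^sub>m N)) / n (1\<^sub>m N) \<in> {n (S X) / n X | X. X \<in> carrier_mat N N \<and> X \<noteq> 0\<^sub>m N N}"
    by auto
  have "0 \<le> n (S (1\<^sub>m N)) / n (1\<^sub>m N)"
    using nn[OF S[OF one_carrier_mat]] nn[OF one_carrier_mat] by simp
  also have "\<dots> \<le> Sup {n (S X) / n X | X. X \<in> carrier_mat N N \<and> X \<noteq> 0\<^sub>m N N}"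
    by (rule cSup_upper[OF mem bdd])
  finally show ?thesis .
qed

lemma nonempty_ratio_set: fixes n :: "complex mat \<Rightarrow> real" and S :: "complex mat \<Rightarrow> complex mat"
  assumes N: "N \<ge> 1"
  shows "{n (S X) / n X | X. X \<in> carrier_mat N N \<and> X \<noteq> 0\<^sub>m N N} \<noteq> {}"
proof -
  have "1\<^sub>m N \<noteq> (0\<^sub>m N N :: complex mat)" by (rule one_neq_zero_mat[OF N])
  then show ?thesis using one_carrier_mat by blast
qed

lemma le_Sup_ratio:
  fixes n :: "complex mat \<Rightarrow> real" and S :: "complex mat \<Rightarrow> complex mat"
  assumes bdd: "bdd_above {n (S X) / n X | X. X \<in> carrier_mat N N \<and> X \<noteq> 0\<^sub>m N N}"
    and X: "X \<in> carrier_mat N N" "X \<noteq> 0\<^sub>m N N" and pos: "0 < n X"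
  shows "n (S X) \<le> Sup {n (S X) / n X | X. X \<in> carrier_mat N N \<and> X \<noteq> 0\<^sub>m N N} * n X"
proof -
  have "n (S X) / n X \<le> Sup {n (S X) / n X | X. X \<in> carrier_mat N N \<and> X \<noteq> 0\<^sub>m N N}"
    by (rule cSup_upper[OF _ bdd]) (use X in auto)
  then show ?thesis using pos by (simp add: divide_le_eq)
qed

lemma induced_adjoint_generic:
  fixes n1 n2 :: "complex mat \<Rightarrow> real" and T Tadj :: "complex mat \<Rightarrow> complex mat"
  assumes N: "N \<ge> 1"
    and Tc: "\<And>X. X \<in> carrier_mat N N \<Longrightarrow> T X \<in> carrier_mat N N"
    and adj: "is_hs_adjoint N T Tadj"
    and nn1: "\<And>X. X \<in> carrier_mat N N \<Longrightarrow> 0 \<le> n1 X"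
    and nn2: "\<And>X. X \<in> carrier_mat N N \<Longrightarrow> 0 \<le> n2 X"
    and H: "\<And>A B. A \<in> carrier_mat N N \<Longrightarrow> B \<in> carrier_mat N N \<Longrightarrow> cmod (hs_inner A B) \<le> n1 A * n2 B"
    and At1: "\<And>X. X \<in> carrier_mat N N \<Longrightarrow> \<exists>B\<in>carrier_mat N N. n2 B \<le> 1 \<and> n1 X \<le> cmod (hs_inner B X)"
    and At2: "\<And>Y. Y \<in> carrier_mat N N \<Longrightarrow> \<exists>A\<in>carrier_mat N N. n1 A \<le> 1 \<and> n2 Y \<le> cmod (hs_inner A Y)"
  shows "induced_norm N n1 Tadj = induced_norm N n2 T"
proof -
  have Sc: "\<And>X. X \<in> carrier_mat N N \<Longrightarrow> Tadj X \<in> carrier_mat N N"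
    using adj unfolding is_hs_adjoint_def by auto
  have adjeq: "\<And>A B. A \<in> carrier_mat N N \<Longrightarrow> B \<in> carrier_mat N N \<Longrightarrow> hs_inner A (T B) = hs_inner (Tadj A) B"
    using adj unfolding is_hs_adjoint_def by auto
  have H': "\<And>A B. A \<in> carrier_mat N N \<Longrightarrow> B \<in> carrier_mat N N \<Longrightarrow> cmod (hs_inner A B) \<le> n2 A * n1 B"
  proof -
    fix A B :: "complex mat" assume A: "A \<in> carrier_mat N N" and B: "B \<in> carrier_mat N N"
    have "cmod (hs_inner A B) = cmod (hs_inner B A)" by (rule hs_inner_cmod_sym[OF B A])
    also have "\<dots> \<le> n1 B * n2 A" by (rule H[OF B A])
    finally show "cmod (hs_inner A B) \<le> n2 A * n1 B" by (simp add: mult.commute)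
  qed
  have pos1: "\<And>X. X \<in> carrier_mat N N \<Longrightarrow> X \<noteq> 0\<^sub>m N N \<Longrightarrow> 0 < n1 X"
  proof -
    fix X :: "complex mat" assume X: "X \<in> carrier_mat N N" "X \<noteq> 0\<^sub>m N N"
    have "0 < n1 X * n2 X" using hs_inner_self_pos[OF X] H[OF X(1) X(1)] by linarith
    then show "0 < n1 X" using nn1[OF X(1)] nn2[OF X(1)]
      by (cases "n1 X = 0") auto
  qed
  have pos2: "\<And>X. X \<in> carrier_mat N N \<Longrightarrow> X \<noteq> 0\<^sub>m N N \<Longrightarrow> 0 < n2 X"
  proof -
    fix X :: "complex mat" assume X: "X \<in> carrier_mat N N" "X \<noteq> 0\<^sub>m N N"
    have "0 < n1 X * n2 X" using hs_inner_self_pos[OF X] H[OF X(1) X(1)] by linarith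
    then show "0 < n2 X" using nn1[OF X(1)] nn2[OF X(1)]
      by (cases "n2 X = 0") auto
  qed
  define K1 where "K1 = (\<Sum>i<N. \<Sum>k<N. n1 (Emat N k i) * n2 (T (Emat N k i)))"
  define K2 where "K2 = (\<Sum>i<N. \<Sum>k<N. n2 (Emat N k i) * n1 (Tadj (Emat N k i)))"
  have K1nn: "0 \<le> K1" unfolding K1_def
    by (intro sum_nonneg mult_nonneg_nonneg nn1 nn2 Tc Emat_carrier)
  have K2nn: "0 \<le> K2" unfolding K2_def
    by (intro sum_nonneg mult_nonneg_nonneg nn1 nn2 Sc Emat_carrier)
  have bound1: "n1 (Tadj X) \<le> K1 * n1 X" if X: "X \<in> carrier_mat N N" for X
  proof -
    have "n1 (Tadj X) \<le> (\<Sum>i<N. \<Sum>k<N. n1 (Emat N k i) * cmod (Tadj X $$ (k,i)))"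
      by (rule norm_bound_entries[of N n1 n2, OF nn1 H At1 Sc[OF X]])
    also have "\<dots> \<le> (\<Sum>i<N. \<Sum>k<N. n1 (Emat N k i) * (n2 (T (Emat N k i)) * n1 X))"
    proof (intro sum_mono mult_left_mono nn1 Emat_carrier)
      fix i k assume ik: "i \<in> {..<N}" "k \<in> {..<N}"
      have "cmod (Tadj X $$ (k,i)) = cmod (hs_inner (Emat N k i) (Tadj X))"
        using hs_inner_Emat[OF Sc[OF X]] ik by simp
      also have "\<dots> = cmod (hs_inner (Tadj X) (Emat N k i))"
        by (rule hs_inner_cmod_sym[OF Sc[OF X] Emat_carrier])
      also have "\<dots> = cmod (hs_inner X (T (Emat N k i)))"
        using adjeq[OF X Emat_carrier] by simp
      also have "\<dots> \<le> n2 (T (Emat N k i)) * n1 X"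
        using H[OF X Tc[OF Emat_carrier]] by (simp add: mult.commute)
      finally show "cmod (Tadj X $$ (k,i)) \<le> n2 (T (Emat N k i)) * n1 X" .
    qed
    also have "\<dots> = K1 * n1 X" unfolding K1_def
      by (simp add: sum_distrib_right mult.assoc)
    finally show ?thesis .
  qed
  have bound2: "n2 (T X) \<le> K2 * n2 X" if X: "X \<in> carrier_mat N N" for X
  proof -
    have "n2 (T X) \<le> (\<Sum>i<N. \<Sum>k<N. n2 (Emat N k i) * cmod (T X $$ (k,i)))"
      by (rule norm_bound_entries[of N n2 n1, OF nn2 H' At2 Tc[OF X]])
    also have "\<dots> \<le> (\<Sum>i<N. \<Sum>k<N. n2 (Emat N k i) * (n1 (Tadj (Emat N k i)) * n2 X))"
    proof (intro sum_mono mult_left_mono nn2 Emat_carrier)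
      fix i k assume ik: "i \<in> {..<N}" "k \<in> {..<N}"
      have "cmod (T X $$ (k,i)) = cmod (hs_inner (Emat N k i) (T X))"
        using hs_inner_Emat[OF Tc[OF X]] ik by simp
      also have "\<dots> = cmod (hs_inner (Tadj (Emat N k i)) X)"
        using adjeq[OF Emat_carrier X] by simp
      also have "\<dots> \<le> n1 (Tadj (Emat N k i)) * n2 X"
        by (rule H[OF Sc[OF Emat_carrier] X])
      finally show "cmod (T X $$ (k,i)) \<le> n1 (Tadj (Emat N k i)) * n2 X" .
    qed
    also have "\<dots> = K2 * n2 X" unfolding K2_def
      by (simp add: sum_distrib_right mult.assoc)
    finally show ?thesis .
  qed
  define S1 where "S1 = {n1 (Tadj X) / n1 X | X. X \<in> carrier_mat N N \<and> X \<noteq> 0\<^sub>m N N}"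
  define S2 where "S2 = {n2 (T X) / n2 X | X. X \<in> carrier_mat N N \<and> X \<noteq> 0\<^sub>m N N}"
  have bdd1: "bdd_above S1" unfolding S1_def by (rule ratio_set_bdd[where n=n1 and S=Tadj and K=K1, OF nn1 bound1 K1nn])
  have bdd2: "bdd_above S2" unfolding S2_def by (rule ratio_set_bdd[where n=n2 and S=T and K=K2, OF nn2 bound2 K2nn])
  have M1: "0 \<le> Sup S1" unfolding S1_def by (rule ratio_set_nonneg[where n=n1 and S=Tadj, OF nn1 Sc N bdd1[unfolded S1_def]])
  have M2: "0 \<le> Sup S2" unfolding S2_def by (rule ratio_set_nonneg[where n=n2 and S=T, OF nn2 Tc N bdd2[unfolded S2_def]])
  have ne1: "S1 \<noteq> {}" unfolding S1_def by (rule nonempty_ratio_set[OF N])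
  have ne2: "S2 \<noteq> {}" unfolding S2_def by (rule nonempty_ratio_set[OF N])
  have le1: "Sup S1 \<le> Sup S2"
  proof (rule cSup_least[OF ne1])
    fix r assume "r \<in> S1"
    then obtain X where X: "X \<in> carrier_mat N N" "X \<noteq> 0\<^sub>m N N" and r: "r = n1 (Tadj X) / n1 X"
      unfolding S1_def by blast
    obtain B where B: "B \<in> carrier_mat N N" "n2 B \<le> 1" "n1 (Tadj X) \<le> cmod (hs_inner B (Tadj X))"
      using At1[OF Sc[OF X(1)]] by blast
    have "n1 (Tadj X) \<le> Sup S2 * n1 X"
    proof (cases "B = 0\<^sub>m N N")
      case True
      then have "n1 (Tadj X) \<le> 0" using B(3) hs_inner_zero_left[OF Sc[OF X(1)]] by simp
      then show ?thesis using M2 nn1[OF X(1)] by (meson mult_nonneg_nonneg order.trans)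
    next
      case False
      have "n1 (Tadj X) \<le> cmod (hs_inner X (T B))"
        using B(3) hs_inner_cmod_sym[OF Sc[OF X(1)] B(1)] adjeq[OF X(1) B(1)] by simp
      also have "\<dots> \<le> n1 X * n2 (T B)" by (rule H[OF X(1) Tc[OF B(1)]])
      also have "\<dots> \<le> n1 X * (Sup S2 * n2 B)"
        using le_Sup_ratio[OF bdd2[unfolded S2_def] B(1) False pos2[OF B(1) False]] nn1[OF X(1)]
        unfolding S2_def by (simp add: mult_left_mono)
      also have "\<dots> \<le> n1 X * Sup S2"
        using B(2) M2 nn1[OF X(1)] by (intro mult_left_mono mult_left_le) auto
      finally show ?thesis by (simp add: mult.commute)
    qed
    then show "r \<le> Sup S2" unfolding r using pos1[OF X] by (simp add: divide_le_eq)
  qed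
  have le2: "Sup S2 \<le> Sup S1"
  proof (rule cSup_least[OF ne2])
    fix r assume "r \<in> S2"
    then obtain X where X: "X \<in> carrier_mat N N" "X \<noteq> 0\<^sub>m N N" and r: "r = n2 (T X) / n2 X"
      unfolding S2_def by blast
    obtain A where A: "A \<in> carrier_mat N N" "n1 A \<le> 1" "n2 (T X) \<le> cmod (hs_inner A (T X))"
      using At2[OF Tc[OF X(1)]] by blast
    have "n2 (T X) \<le> Sup S1 * n2 X"
    proof (cases "A = 0\<^sub>m N N")
      case True
      then have "n2 (T X) \<le> 0" using A(3) hs_inner_zero_left[OF Tc[OF X(1)]] by simp
      then show ?thesis using M1 nn2[OF X(1)] by (meson mult_nonneg_nonneg order.trans)
    next
      case False
      have "n2 (T X) \<le> cmod (hs_inner (Tadj A) X)"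
        using A(3) adjeq[OF A(1) X(1)] by simp
      also have "\<dots> \<le> n1 (Tadj A) * n2 X" by (rule H[OF Sc[OF A(1)] X(1)])
      also have "\<dots> \<le> (Sup S1 * n1 A) * n2 X"
        using le_Sup_ratio[OF bdd1[unfolded S1_def] A(1) False pos1[OF A(1) False]] nn2[OF X(1)]
        unfolding S1_def by (simp add: mult_right_mono)
      also have "\<dots> \<le> Sup S1 * n2 X"
        using A(2) M1 nn2[OF X(1)] by (intro mult_right_mono mult_left_le) auto
      finally show ?thesis .
    qed
    then show "r \<le> Sup S1" unfolding r using pos2[OF X] by (simp add: divide_le_eq)
  qed
  show ?thesis unfolding induced_norm_def using le1 le2 unfolding S1_def S2_def by linarith
qed

lemma cscalar_sum: "dim_vec w = n \<Longrightarrow> v \<bullet>c w = (\<Sum>k<n. v $ k * cnj (w $ k))"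
  by (simp add: scalar_prod_def lessThan_atLeast0)

lemma cscalar_self_real: assumes "w \<in> carrier_vec n"
  shows "w \<bullet>c w = complex_of_real (\<Sum>k<n. (cmod (w $ k))\<^sup>2)"
  unfolding cscalar_sum[OF carrier_vecD[OF assms]] of_real_sum
  by (intro sum.cong refl) (rule complex_norm_square[symmetric])

lemma unitary_completion:
  assumes v: "v \<in> carrier_vec n" and v1: "v \<bullet>c v = 1"
  shows "\<exists>W \<in> carrier_mat n n. adj W * W = 1\<^sub>m n \<and> (\<forall>k<n. W $$ (k,0) = v $ k)"
proof -
  have v0: "v \<noteq> 0\<^sub>v n" using v1 v by auto
  interpret cof_vec_space n "TYPE(complex)" .
  define b where "b = basis_completion v"
  from basis_completion[OF v v0, folded b_def]
  have b: "set b \<subseteq> carrier_vec n" "distinct b" "\<not> lin_dep (set b)" "length b = n" "hd b = v"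
    by auto
  have n0: "n \<noteq> 0" using v v0 by (metis carrier_vecD eq_vecI index_zero_vec(2) less_nat_zero_code)
  obtain vs where bv: "b = v # vs" using b(4,5) n0 by (cases b) auto
  define ws where "ws = gram_schmidt n b"
  from gram_schmidt_result[OF b(1) b(2) b(3) ws_def]
  have ws: "corthogonal ws" "set ws \<subseteq> carrier_vec n" "length ws = n"
    using b(4) by auto
  have hdws: "hd ws = v" unfolding ws_def bv using gram_schmidt_hd[OF v, of vs] by simp
  have ws0: "ws ! 0 = v" using hdws ws(3) n0 by (cases ws) auto
  define nf where "nf j = sqrt (\<Sum>k<n. (cmod (ws ! j $ k))\<^sup>2)" for j
  have wsc: "ws ! j \<in> carrier_vec n" if "j < n" for j using ws that by auto
  have self: "ws ! j \<bullet>c ws ! j = complex_of_real ((nf j)\<^sup>2)" if "j < n" for j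
  proof -
    have "0 \<le> (\<Sum>k<n. (cmod (ws ! j $ k))\<^sup>2)" by (intro sum_nonneg) simp
    then show ?thesis using cscalar_self_real[OF wsc[OF that]] unfolding nf_def by simp
  qed
  have nfpos: "0 < nf j" if j: "j < n" for j
  proof -
    have "ws ! j \<bullet>c ws ! j \<noteq> 0" using ws(1) j ws(3) unfolding corthogonal_def by auto
    then have "nf j \<noteq> 0" using self[OF j] by auto
    moreover have "0 \<le> nf j" unfolding nf_def by (intro real_sqrt_ge_zero sum_nonneg) simp
    ultimately show ?thesis by simp
  qed
  have orth: "ws ! i \<bullet>c ws ! j = 0" if "i < n" "j < n" "i \<noteq> j" for i j
    using ws(1) ws(3) that unfolding corthogonal_def by auto
  have nf0: "nf 0 = 1"
  proof -
    have "complex_of_real ((nf 0)\<^sup>2) = 1" using self[of 0] n0 ws0 v1 by simp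
    then have "(nf 0)\<^sup>2 = 1" by (metis of_real_eq_1_iff)
    then show ?thesis using nfpos[of 0] n0 by (simp add: power2_eq_1_iff)
  qed
  define W where "W = mat n n (\<lambda>(k,j). ws ! j $ k / complex_of_real (nf j))"
  have W: "W \<in> carrier_mat n n" unfolding W_def by simp
  have "adj W * W = 1\<^sub>m n"
  proof (rule eq_matI)
    fix i j assume "i < dim_row (1\<^sub>m n)" "j < dim_col (1\<^sub>m n)"
    then have i: "i < n" and j: "j < n" by auto
    have "(adj W * W) $$ (i,j) = (\<Sum>k<n. cnj (W $$ (k,i)) * W $$ (k,j))"
      using W i j by (subst mult_index_sum[of _ n n _ n]) auto
    also have "\<dots> = (\<Sum>k<n. ws ! j $ k * cnj (ws ! i $ k)) / complex_of_real (nf i * nf j)"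
      unfolding sum_divide_distrib
      by (intro sum.cong refl) (use i j in \<open>auto simp: W_def\<close>)
    also have "\<dots> = (ws ! j \<bullet>c ws ! i) / complex_of_real (nf i * nf j)"
      using wsc[OF i] by (simp add: cscalar_sum)
    also have "\<dots> = 1\<^sub>m n $$ (i,j)"
    proof (cases "i = j")
      case True
      then show ?thesis using self[OF i] nfpos[OF i] i by (simp add: power2_eq_square)
    next
      case False
      then show ?thesis using orth[OF j i] i j by simp
    qed
    finally show "(adj W * W) $$ (i,j) = 1\<^sub>m n $$ (i,j)" .
  qed (use W in auto)
  moreover have "\<forall>k<n. W $$ (k,0) = v $ k" using n0 ws0 nf0 unfolding W_def by simp
  ultimately show ?thesis using W by blast
qed

definition blk :: "complex mat \<Rightarrow> complex mat" where
  "blk X = mat (Suc (dim_row X)) (Suc (dim_row X))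
     (\<lambda>(i,j). if i = 0 \<and> j = 0 then 1 else if i = 0 \<or> j = 0 then 0 else X $$ (i - 1, j - 1))"

lemma blk_carrier[simp]: "X \<in> carrier_mat m m \<Longrightarrow> blk X \<in> carrier_mat (Suc m) (Suc m)"
  unfolding blk_def by auto

lemma blk_dims[simp]: "dim_row (blk X) = Suc (dim_row X)" "dim_col (blk X) = Suc (dim_row X)"
  unfolding blk_def by simp_all

lemma blk_index:
  assumes "X \<in> carrier_mat m m"
  shows "blk X $$ (0,0) = 1"
    "j < m \<Longrightarrow> blk X $$ (0, Suc j) = 0"
    "i < m \<Longrightarrow> blk X $$ (Suc i, 0) = 0"
    "i < m \<Longrightarrow> j < m \<Longrightarrow> blk X $$ (Suc i, Suc j) = X $$ (i,j)"
  using assms unfolding blk_def by auto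

lemma adj_blk: assumes X: "X \<in> carrier_mat m m" shows "adj (blk X) = blk (adj X)"
proof (rule eq_matI)
  fix i j assume "i < dim_row (blk (adj X))" "j < dim_col (blk (adj X))"
  then have i: "i < Suc m" and j: "j < Suc m" using X by auto
  have AX: "adj X \<in> carrier_mat m m" using X by simp
  have B: "blk X \<in> carrier_mat (Suc m) (Suc m)" using X by simp
  have "adj (blk X) $$ (i,j) = cnj (blk X $$ (j,i))" using i j B by (intro adj_index) auto
  also have "\<dots> = blk (adj X) $$ (i,j)"
  proof (cases i)
    case 0
    then show ?thesis using j blk_index[OF X] blk_index[OF AX] by (cases j) auto
  next
    case (Suc i')
    then show ?thesis using i j X blk_index[OF X] blk_index[OF AX] by (cases j) auto
  qed
  finally show "adj (blk X) $$ (i,j) = blk (adj X) $$ (i,j)" .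
qed (use X in auto)

lemma mult_blk_right0:
  assumes X: "X \<in> carrier_mat m m" and M: "M \<in> carrier_mat (Suc m) (Suc m)" and i: "i < Suc m"
  shows "(M * blk X) $$ (i,0) = M $$ (i,0)"
proof -
  have "(M * blk X) $$ (i,0) = (\<Sum>l<Suc m. M $$ (i,l) * blk X $$ (l,0))"
    using X M i by (intro mult_index_sum[where n="Suc m" and k="Suc m" and m="Suc m"]) auto
  also have "\<dots> = M $$ (i,0)"
    unfolding sum.lessThan_Suc_shift using blk_index[OF X] by simp
  finally show ?thesis .
qed

lemma mult_blk_rightS:
  assumes X: "X \<in> carrier_mat m m" and M: "M \<in> carrier_mat (Suc m) (Suc m)" and i: "i < Suc m"
    and j: "j < m"
  shows "(M * blk X) $$ (i, Suc j) = (\<Sum>l<m. M $$ (i, Suc l) * X $$ (l,j))"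
proof -
  have "(M * blk X) $$ (i, Suc j) = (\<Sum>l<Suc m. M $$ (i,l) * blk X $$ (l, Suc j))"
    using X M i j by (intro mult_index_sum[where n="Suc m" and k="Suc m" and m="Suc m"]) auto
  also have "\<dots> = (\<Sum>l<m. M $$ (i, Suc l) * X $$ (l,j))"
    unfolding sum.lessThan_Suc_shift using blk_index[OF X] j by simp
  finally show ?thesis .
qed

lemma mult_blk_left0:
  assumes X: "X \<in> carrier_mat m m" and M: "M \<in> carrier_mat (Suc m) (Suc m)" and j: "j < Suc m"
  shows "(blk X * M) $$ (0,j) = M $$ (0,j)"
proof -
  have "(blk X * M) $$ (0,j) = (\<Sum>l<Suc m. blk X $$ (0,l) * M $$ (l,j))"
    using X M j by (intro mult_index_sum[where n="Suc m" and k="Suc m" and m="Suc m"]) auto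
  also have "\<dots> = M $$ (0,j)"
    unfolding sum.lessThan_Suc_shift using blk_index[OF X] by simp
  finally show ?thesis .
qed

lemma mult_blk_leftS:
  assumes X: "X \<in> carrier_mat m m" and M: "M \<in> carrier_mat (Suc m) (Suc m)" and j: "j < Suc m"
    and i: "i < m"
  shows "(blk X * M) $$ (Suc i, j) = (\<Sum>k<m. X $$ (i,k) * M $$ (Suc k, j))"
proof -
  have "(blk X * M) $$ (Suc i, j) = (\<Sum>l<Suc m. blk X $$ (Suc i, l) * M $$ (l,j))"
    using X M i j by (intro mult_index_sum[where n="Suc m" and k="Suc m" and m="Suc m"]) auto
  also have "\<dots> = (\<Sum>k<m. X $$ (i,k) * M $$ (Suc k, j))"
    unfolding sum.lessThan_Suc_shift using blk_index[OF X] i by simp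
  finally show ?thesis .
qed

lemma blk_mult: assumes X: "X \<in> carrier_mat m m" and Y: "Y \<in> carrier_mat m m"
  shows "blk X * blk Y = blk (X * Y)"
proof (rule eq_matI)
  have XY: "X * Y \<in> carrier_mat m m" using X Y by simp
  fix i j assume "i < dim_row (blk (X * Y))" "j < dim_col (blk (X * Y))"
  then have i: "i < Suc m" and j: "j < Suc m" using XY by auto
  show "(blk X * blk Y) $$ (i,j) = blk (X * Y) $$ (i,j)"
  proof (cases j)
    case 0
    then show ?thesis using mult_blk_right0[OF Y blk_carrier[OF X] i] i X XY
      by (cases i) (auto simp: blk_index)
  next
    case (Suc j')
    then have j': "j' < m" using j by simp
    have "(blk X * blk Y) $$ (i,j) = (\<Sum>l<m. blk X $$ (i, Suc l) * Y $$ (l,j'))"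
      unfolding Suc by (rule mult_blk_rightS[OF Y blk_carrier[OF X] i j'])
    also have "\<dots> = blk (X * Y) $$ (i,j)"
    proof (cases i)
      case 0 then show ?thesis using X XY j' Suc by (simp add: blk_index)
    next
      case (Suc i')
      then have i': "i' < m" using i by simp
      have "(\<Sum>l<m. blk X $$ (i, Suc l) * Y $$ (l,j')) = (\<Sum>l<m. X $$ (i', l) * Y $$ (l,j'))"
        unfolding Suc by (intro sum.cong refl) (use X i' in \<open>auto simp: blk_index\<close>)
      also have "\<dots> = (X * Y) $$ (i',j')" by (rule mult_index_sum[symmetric, OF X Y i' j'])
      also have "\<dots> = blk (X * Y) $$ (i,j)" using XY i' j' \<open>i = Suc i'\<close> \<open>j = Suc j'\<close>
        by (simp add: blk_index)
      finally show ?thesis .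
    qed
    finally show ?thesis .
  qed
qed (use X Y in auto)

lemma blk_one: "blk (1\<^sub>m m) = 1\<^sub>m (Suc m)"
  by (rule eq_matI) (auto simp: blk_def)

lemma assoc4: assumes "A \<in> carrier_mat n n" "B \<in> carrier_mat n n" "C \<in> carrier_mat n n" "D \<in> carrier_mat n n"
  shows "(A * B) * (C * D) = A * (B * C) * D"
proof -
  have "(A * B) * (C * D) = A * (B * (C * D))" using assms by (intro assoc_mult_mat) auto
  also have "B * (C * D) = (B * C) * D" using assms by (intro assoc_mult_mat[symmetric]) auto
  also have "A * ((B * C) * D) = (A * (B * C)) * D" using assms by (intro assoc_mult_mat[symmetric]) auto
  finally show ?thesis .
qed

lemma assoc5: assumes "A \<in> carrier_mat n n" "B \<in> carrier_mat n n" "C \<in> carrier_mat n n" "D \<in> carrier_mat n n"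
  "E \<in> carrier_mat n n"
  shows "(A * B) * E * (C * D) = A * (B * E * C) * D"
proof -
  have "(A * B) * E = A * (B * E)" using assms by (intro assoc_mult_mat) auto
  then have "(A * B) * E * (C * D) = (A * (B * E)) * (C * D)" by simp
  also have "\<dots> = A * ((B * E) * C) * D" using assms by (intro assoc4) auto
  finally show ?thesis .
qed

lemma diag_zero: "diagonal_mat A \<Longrightarrow> A \<in> carrier_mat m m \<Longrightarrow> i < m \<Longrightarrow> j < m \<Longrightarrow> i \<noteq> j \<Longrightarrow> A $$ (i,j) = 0"
  unfolding diagonal_mat_def by auto

lemma spectral:
  assumes "H \<in> carrier_mat n n" "adj H = H"
  shows "\<exists>U \<in> carrier_mat n n. adj U * U = 1\<^sub>m n \<and> diagonal_mat (adj U * H * U)"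
  using assms
proof (induction n arbitrary: H)
  case 0
  show ?case by (rule bexI[of _ "1\<^sub>m 0"]) (auto simp: diagonal_mat_def)
next
  case (Suc m)
  define n where "n = Suc m"
  have H: "H \<in> carrier_mat n n" and herm: "adj H = H" using Suc.prems n_def by auto
  obtain as where cp: "char_poly H = (\<Prod>a\<leftarrow>as. [:- a, 1:])" "length as = n"
    using char_poly_factorized[OF H] by blast
  obtain e rest where as: "as = e # rest" using cp(2) n_def by (cases as) auto
  have "poly (char_poly H) e = 0" unfolding cp(1) as by simp
  then have "eigenvalue H e" using eigenvalue_root_char_poly[OF H] by simp
  define v0 where "v0 = find_eigenvector H e"
  have "eigenvector H v0 e" unfolding v0_def by (rule find_eigenvector[OF H \<open>eigenvalue H e\<close>])
  then have v0: "v0 \<in> carrier_vec n" "v0 \<noteq> 0\<^sub>v n" "H *\<^sub>v v0 = e \<cdot>\<^sub>v v0"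
    unfolding eigenvector_def using H by auto
  define r where "r = sqrt (\<Sum>k<n. (cmod (v0 $ k))\<^sup>2)"
  have v0self: "v0 \<bullet>c v0 = complex_of_real (r\<^sup>2)"
  proof -
    have "0 \<le> (\<Sum>k<n. (cmod (v0 $ k))\<^sup>2)" by (intro sum_nonneg) simp
    then show ?thesis using cscalar_self_real[OF v0(1)] unfolding r_def by simp
  qed
  have rpos: "0 < r"
  proof -
    have "v0 \<bullet>c v0 \<noteq> 0" using v0(1,2) by simp
    then have "r \<noteq> 0" using v0self by auto
    moreover have "0 \<le> r" unfolding r_def by (intro real_sqrt_ge_zero sum_nonneg) simp
    ultimately show ?thesis by simp
  qed
  define v where "v = complex_of_real (1 / r) \<cdot>\<^sub>v v0"
  have v: "v \<in> carrier_vec n" unfolding v_def using v0 by simp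
  have vv: "v \<bullet>c v = 1"
  proof -
    have "v \<bullet>c v = complex_of_real (1/r) * complex_of_real (1/r) * (v0 \<bullet>c v0)"
      unfolding v_def using v0(1) by (simp add: conjugate_smult_vec)
    also have "\<dots> = 1" using v0self rpos by (simp add: power2_eq_square)
    finally show ?thesis .
  qed
  have Hv: "H *\<^sub>v v = e \<cdot>\<^sub>v v"
    unfolding v_def using mult_mat_vec[OF H v0(1)] v0(3) by (simp add: smult_smult_assoc mult.commute)
  obtain W where W: "W \<in> carrier_mat n n" "adj W * W = 1\<^sub>m n" "\<forall>k<n. W $$ (k,0) = v $ k"
    using unitary_completion[OF v vv] by blast
  have n0: "0 < n" using n_def by simp
  have colW: "col W 0 = v" using W v n0 by (intro eq_vecI) auto
  define H' where "H' = adj W * H * W"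
  have H': "H' \<in> carrier_mat n n" unfolding H'_def using W H by auto
  have H'assoc: "H' = adj W * (H * W)" unfolding H'_def by (rule assoc_mult_mat[OF adj_carrier[OF W(1)] H W(1)])
  have "col H' 0 = e \<cdot>\<^sub>v unit_vec n 0"
  proof -
    have "col H' 0 = adj W *\<^sub>v col (H * W) 0" unfolding H'assoc using W H n0
      by (intro col_mult2[of _ n n]) auto
    also have "col (H * W) 0 = H *\<^sub>v v" using W H n0 colW by (subst col_mult2[of _ n n]) auto
    also have "adj W *\<^sub>v (H *\<^sub>v v) = e \<cdot>\<^sub>v (adj W *\<^sub>v v)"
      unfolding Hv using mult_mat_vec[OF adj_carrier[OF W(1)] v] .
    also have "adj W *\<^sub>v v = col (adj W * W) 0" using W n0 colW by (subst col_mult2[of _ n n]) auto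
    also have "\<dots> = unit_vec n 0" using W(2) n0 by simp
    finally show ?thesis .
  qed
  then have H'col: "H' $$ (i,0) = (if i = 0 then e else 0)" if "i < n" for i
    using that H' n0 by (metis carrier_matD index_col index_smult_vec(1) index_unit_vec(1,3) mult.right_neutral mult_zero_right)
  have H'herm: "adj H' = H'"
  proof -
    have "adj H' = adj (H * W) * adj (adj W)" unfolding H'assoc using W H by (intro adj_mult[of _ n n _ n]) auto
    also have "adj (H * W) = adj W * adj H" using W H by (intro adj_mult[of _ n n _ n]) auto
    finally show ?thesis using W H herm unfolding H'_def by simp
  qed
  have H'row: "H' $$ (0,j) = 0" if "j < n" "j \<noteq> 0" for j
  proof -
    have "H' $$ (0,j) = adj H' $$ (0,j)" using H'herm by simp
    also have "\<dots> = cnj (H' $$ (j,0))" using H' that n0 by simp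
    finally show ?thesis using H'col[OF that(1)] that by simp
  qed
  define H3 where "H3 = mat m m (\<lambda>(i,j). H' $$ (Suc i, Suc j))"
  have H3: "H3 \<in> carrier_mat m m" unfolding H3_def by simp
  have H3herm: "adj H3 = H3"
  proof (rule eq_matI)
    fix i j assume "i < dim_row H3" "j < dim_col H3"
    then have i: "i < m" and j: "j < m" using H3 by auto
    have "adj H3 $$ (i,j) = cnj (H' $$ (Suc j, Suc i))" using i j H3 unfolding H3_def by simp
    also have "\<dots> = adj H' $$ (Suc i, Suc j)" using H' i j n_def by simp
    also have "\<dots> = H3 $$ (i,j)" using H'herm i j unfolding H3_def by simp
    finally show "adj H3 $$ (i,j) = H3 $$ (i,j)" .
  qed (use H3 in auto)
  obtain U3 where U3: "U3 \<in> carrier_mat m m" "adj U3 * U3 = 1\<^sub>m m" "diagonal_mat (adj U3 * H3 * U3)"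
    using Suc.IH[OF H3 H3herm] by blast
  define U where "U = W * blk U3"
  have B: "blk U3 \<in> carrier_mat n n" using U3 n_def by simp
  have AB: "blk (adj U3) \<in> carrier_mat n n" using U3 n_def by simp
  have U: "U \<in> carrier_mat n n" unfolding U_def using W B by simp
  have adjU: "adj U = blk (adj U3) * adj W"
    unfolding U_def using adj_mult[OF W(1) B] adj_blk[OF U3(1)] by simp
  have "adj U * U = (blk (adj U3) * adj W) * (W * blk U3)" using adjU U_def by simp
  also have "\<dots> = blk (adj U3) * (adj W * W) * blk U3"
    using W(1) AB B by (intro assoc4) auto
  also have "\<dots> = blk (adj U3) * blk U3" using W(2) right_mult_one_mat[OF AB] by simp
  also have "\<dots> = blk (adj U3 * U3)" using U3 by (intro blk_mult) auto
  also have "\<dots> = 1\<^sub>m n" using U3(2) blk_one n_def by simp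
  finally have unit: "adj U * U = 1\<^sub>m n" .
  have "adj U * H * U = (blk (adj U3) * adj W) * H * (W * blk U3)" using adjU U_def by simp
  also have "\<dots> = blk (adj U3) * (adj W * H * W) * blk U3"
    using W(1) AB B H by (intro assoc5) auto
  finally have Deq: "adj U * H * U = blk (adj U3) * H' * blk U3" unfolding H'_def .
  define M where "M = blk (adj U3) * H'"
  have M: "M \<in> carrier_mat (Suc m) (Suc m)" unfolding M_def using AB H' n_def by simp
  have H'n: "H' \<in> carrier_mat (Suc m) (Suc m)" using H' n_def by simp
  have AU3: "adj U3 \<in> carrier_mat m m" using U3 by simp
  have Mrow0: "M $$ (0, Suc l) = 0" if "l < m" for l
    unfolding M_def using mult_blk_left0[OF AU3 H'n] H'row[of "Suc l"] that n_def by simp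
  have Mcol0: "M $$ (Suc i, 0) = 0" if "i < m" for i
    unfolding M_def using mult_blk_leftS[OF AU3 H'n _ that, of 0] H'col n_def by simp
  have MSS: "M $$ (Suc i, Suc l) = (adj U3 * H3) $$ (i,l)" if "i < m" "l < m" for i l
  proof -
    have "M $$ (Suc i, Suc l) = (\<Sum>k<m. adj U3 $$ (i,k) * H' $$ (Suc k, Suc l))"
      unfolding M_def using mult_blk_leftS[OF AU3 H'n _ that(1), of "Suc l"] that by simp
    also have "\<dots> = (\<Sum>k<m. adj U3 $$ (i,k) * H3 $$ (k,l))"
      by (intro sum.cong refl) (use that in \<open>simp add: H3_def\<close>)
    also have "\<dots> = (adj U3 * H3) $$ (i,l)" by (rule mult_index_sum[symmetric, OF AU3 H3 that])
    finally show ?thesis .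
  qed
  have "diagonal_mat (blk (adj U3) * H' * blk U3)"
    unfolding diagonal_mat_def
  proof (intro allI impI)
    fix i j assume i: "i < dim_row (blk (adj U3) * H' * blk U3)" and j: "j < dim_col (blk (adj U3) * H' * blk U3)"
      and ij: "i \<noteq> j"
    have i': "i < Suc m" and j': "j < Suc m" using i j AB B n_def by auto
    have D: "blk (adj U3) * H' * blk U3 = M * blk U3" unfolding M_def ..
    show "(blk (adj U3) * H' * blk U3) $$ (i,j) = 0"
      unfolding D
    proof (cases j)
      case 0
      then obtain i0 where i0: "i = Suc i0" using ij by (cases i) auto
      then show "(M * blk U3) $$ (i,j) = 0"
        using mult_blk_right0[OF U3(1) M i'] Mcol0[of i0] i' 0 by simp
    next
      case (Suc j0)
      have j0: "j0 < m" using j' Suc by simp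
      have "(M * blk U3) $$ (i,j) = (\<Sum>l<m. M $$ (i, Suc l) * U3 $$ (l,j0))"
        unfolding Suc by (rule mult_blk_rightS[OF U3(1) M i' j0])
      also have "\<dots> = 0"
      proof (cases i)
        case 0 then show ?thesis using Mrow0 by simp
      next
        case (Suc i0)
        have i0: "i0 < m" using i' Suc by simp
        have "(\<Sum>l<m. M $$ (i, Suc l) * U3 $$ (l,j0)) = (\<Sum>l<m. (adj U3 * H3) $$ (i0,l) * U3 $$ (l,j0))"
          unfolding Suc by (intro sum.cong refl) (use MSS i0 in simp)
        also have "\<dots> = (adj U3 * H3 * U3) $$ (i0,j0)"
          using AU3 H3 U3(1) i0 j0 by (intro mult_index_sum[symmetric]) auto
        also have "\<dots> = 0" using ij Suc \<open>j = Suc j0\<close>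
          by (intro diag_zero[OF U3(3) _ i0 j0]) (use AU3 H3 U3(1) in auto)
        finally show ?thesis .
      qed
      finally show "(M * blk U3) $$ (i,j) = 0" .
    qed
  qed
  then show ?case using U unit Deq n_def by auto
qed

lemma mat_trace_sum: "X \<in> carrier_mat n n \<Longrightarrow> mat_trace X = (\<Sum>i<n. X $$ (i,i))"
  unfolding mat_trace_def by simp

lemma mat_trace_comm: assumes X: "X \<in> carrier_mat n n" and Y: "Y \<in> carrier_mat n n"
  shows "mat_trace (X * Y) = mat_trace (Y * X)"
proof -
  have "mat_trace (X * Y) = (\<Sum>i<n. (X * Y) $$ (i,i))" using X Y by (intro mat_trace_sum) auto
  also have "\<dots> = (\<Sum>i<n. \<Sum>k<n. X $$ (i,k) * Y $$ (k,i))"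
    by (intro sum.cong refl mult_index_sum[OF X Y]) auto
  also have "\<dots> = (\<Sum>k<n. \<Sum>i<n. Y $$ (k,i) * X $$ (i,k))"
    by (subst sum.swap) (simp add: mult.commute)
  also have "\<dots> = (\<Sum>k<n. (Y * X) $$ (k,k))"
    by (intro sum.cong refl mult_index_sum[OF Y X, symmetric]) auto
  also have "\<dots> = mat_trace (Y * X)" using X Y by (intro mat_trace_sum[symmetric]) auto
  finally show ?thesis .
qed

lemma hs_inner_unitary:
  assumes A: "A \<in> carrier_mat n n" and B: "B \<in> carrier_mat n n" and U: "U \<in> carrier_mat n n"
    and UU: "U * adj U = 1\<^sub>m n"
  shows "hs_inner (A * U) (B * U) = hs_inner A B"
proof -
  have AU: "adj U \<in> carrier_mat n n" "adj A \<in> carrier_mat n n" using A U by auto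
  have "adj (A * U) * (B * U) = adj U * ((adj A * B) * U)"
    using A B U AU by (simp add: adj_mult[OF A U] assoc_mult_mat[of _ n n _ n _ n])
  then have "hs_inner (A * U) (B * U) = mat_trace (adj U * ((adj A * B) * U))"
    unfolding hs_inner_def by simp
  also have "\<dots> = mat_trace (((adj A * B) * U) * adj U)"
    using A B U AU by (intro mat_trace_comm[of _ n]) auto
  also have "((adj A * B) * U) * adj U = (adj A * B) * (U * adj U)"
    using A B U AU by (intro assoc_mult_mat[of _ n n _ n _ n]) auto
  also have "\<dots> = adj A * B" using UU A B AU by simp
  finally show ?thesis unfolding hs_inner_def .
qed

lemma cs_real:
  fixes a b :: "'a \<Rightarrow> real"
  shows "(\<Sum>i\<in>I. a i * b i)\<^sup>2 \<le> (\<Sum>i\<in>I. (a i)\<^sup>2) * (\<Sum>i\<in>I. (b i)\<^sup>2)"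
proof (cases "(\<Sum>i\<in>I. (b i)\<^sup>2) = 0")
  case True
  have "\<forall>i\<in>I. b i = 0" if "finite I"
    using True that by (subst (asm) sum_nonneg_eq_0_iff) auto
  then show ?thesis by (cases "finite I") auto
next
  case False
  define B where "B = (\<Sum>i\<in>I. (b i)\<^sup>2)"
  define C where "C = (\<Sum>i\<in>I. a i * b i)"
  define A where "A = (\<Sum>i\<in>I. (a i)\<^sup>2)"
  have Bpos: "0 < B" using False unfolding B_def
    by (metis less_eq_real_def sum_nonneg zero_le_power2)
  define t where "t = C / B"
  have "0 \<le> (\<Sum>i\<in>I. (a i - t * b i)\<^sup>2)" by (intro sum_nonneg) simp
  also have "(\<Sum>i\<in>I. (a i - t * b i)\<^sup>2) = (\<Sum>i\<in>I. (a i)\<^sup>2 - 2 * t * (a i * b i) + t\<^sup>2 * (b i)\<^sup>2)"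
    by (intro sum.cong refl) (simp add: power2_eq_square algebra_simps)
  also have "\<dots> = A - 2 * t * C + t\<^sup>2 * B"
    unfolding A_def B_def C_def by (simp add: sum.distrib sum_subtractf sum_distrib_left)
  also have "\<dots> = A - C\<^sup>2 / B" unfolding t_def using Bpos by (simp add: power2_eq_square field_simps)
  finally have "C\<^sup>2 / B \<le> A" by simp
  then show ?thesis using Bpos unfolding A_def B_def C_def by (simp add: divide_le_eq mult.commute)
qed

lemma cs_sqrt:
  fixes a b :: "'a \<Rightarrow> real"
  shows "(\<Sum>i\<in>I. a i * b i) \<le> sqrt (\<Sum>i\<in>I. (a i)\<^sup>2) * sqrt (\<Sum>i\<in>I. (b i)\<^sup>2)"
proof -
  have "(\<Sum>i\<in>I. a i * b i) \<le> \<bar>\<Sum>i\<in>I. a i * b i\<bar>" by simp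
  also have "\<dots> = sqrt ((\<Sum>i\<in>I. a i * b i)\<^sup>2)" by simp
  also have "\<dots> \<le> sqrt ((\<Sum>i\<in>I. (a i)\<^sup>2) * (\<Sum>i\<in>I. (b i)\<^sup>2))"
    by (intro real_sqrt_le_mono cs_real)
  also have "\<dots> = sqrt (\<Sum>i\<in>I. (a i)\<^sup>2) * sqrt (\<Sum>i\<in>I. (b i)\<^sup>2)" by (simp add: real_sqrt_mult)
  finally show ?thesis .
qed

lemma cs_complex:
  fixes x y :: "'a \<Rightarrow> complex"
  shows "cmod (\<Sum>i\<in>I. cnj (x i) * y i) \<le> sqrt (\<Sum>i\<in>I. (cmod (x i))\<^sup>2) * sqrt (\<Sum>i\<in>I. (cmod (y i))\<^sup>2)"
proof -
  have "cmod (\<Sum>i\<in>I. cnj (x i) * y i) \<le> (\<Sum>i\<in>I. cmod (x i) * cmod (y i))"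
    by (rule order.trans[OF norm_sum]) (simp add: norm_mult)
  also have "\<dots> \<le> sqrt (\<Sum>i\<in>I. (cmod (x i))\<^sup>2) * sqrt (\<Sum>i\<in>I. (cmod (y i))\<^sup>2)"
    by (rule cs_sqrt)
  finally show ?thesis .
qed

lemma vec_norm2_sum: "v \<in> carrier_vec n \<Longrightarrow> vec_norm2 v = sqrt (\<Sum>k<n. (cmod (v $ k))\<^sup>2)"
  unfolding vec_norm2_def by simp

lemma vec_norm2_nonneg: "0 \<le> vec_norm2 v"
  unfolding vec_norm2_def by (intro real_sqrt_ge_zero sum_nonneg) simp

lemma vec_norm2_pos: assumes "v \<in> carrier_vec n" "v \<noteq> 0\<^sub>v n" shows "0 < vec_norm2 v"
proof -
  obtain k where k: "k < n" "v $ k \<noteq> 0" using assms by (metis carrier_vecD eq_vecI index_zero_vec(1,2))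
  have "0 < (\<Sum>k<n. (cmod (v $ k))\<^sup>2)"
    by (rule sum_pos2[of _ k]) (use k in auto)
  then show ?thesis using vec_norm2_sum[OF assms(1)] by simp
qed

lemma cmod_sum_sq_expand:
  fixes f :: "nat \<Rightarrow> complex"
  shows "complex_of_real ((cmod (\<Sum>i<n. f i))\<^sup>2) = (\<Sum>i<n. \<Sum>j<n. f i * cnj (f j))"
proof -
  have "complex_of_real ((cmod (\<Sum>i<n. f i))\<^sup>2) = (\<Sum>i<n. f i) * cnj (\<Sum>j<n. f j)"
    by (rule complex_norm_square)
  also have "\<dots> = (\<Sum>i<n. \<Sum>j<n. f i * cnj (f j))"
    by (simp add: cnj_sum sum_product)
  finally show ?thesis .
qed

lemma mul_cnj_sq: "z * cnj z = (complex_of_real (cmod z))\<^sup>2"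
  by (metis complex_norm_square of_real_power)

lemma norm_mult_diag:
  assumes M: "M \<in> carrier_mat n n" and y: "y \<in> carrier_vec n"
    and D: "\<And>i j. i < n \<Longrightarrow> j < n \<Longrightarrow> (adj M * M) $$ (i,j) = (if i = j then complex_of_real (d i) else 0)"
  shows "(vec_norm2 (M *\<^sub>v y))\<^sup>2 = (\<Sum>i<n. d i * (cmod (y $ i))\<^sup>2)"
proof -
  have My: "M *\<^sub>v y \<in> carrier_vec n" using M y by simp
  have ent: "(M *\<^sub>v y) $ k = (\<Sum>i<n. M $$ (k,i) * y $ i)" if "k < n" for k
    using M y that by (auto simp: scalar_prod_def lessThan_atLeast0 intro!: sum.cong)
  have nn: "0 \<le> (\<Sum>k<n. (cmod ((M *\<^sub>v y) $ k))\<^sup>2)" by (intro sum_nonneg) simp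
  have "complex_of_real ((vec_norm2 (M *\<^sub>v y))\<^sup>2) = complex_of_real (\<Sum>k<n. (cmod ((M *\<^sub>v y) $ k))\<^sup>2)"
    using vec_norm2_sum[OF My] nn by simp
  also have "\<dots> = (\<Sum>k<n. \<Sum>i<n. \<Sum>j<n. (M $$ (k,i) * y $ i) * cnj (M $$ (k,j) * y $ j))"
    unfolding of_real_sum by (intro sum.cong refl) (simp only: lessThan_iff ent cmod_sum_sq_expand)
  also have "\<dots> = (\<Sum>i<n. \<Sum>k<n. \<Sum>j<n. (M $$ (k,i) * y $ i) * cnj (M $$ (k,j) * y $ j))"
    by (rule sum.swap)
  also have "\<dots> = (\<Sum>i<n. \<Sum>j<n. \<Sum>k<n. (M $$ (k,i) * y $ i) * cnj (M $$ (k,j) * y $ j))"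
    by (rule sum.cong[OF refl], rule sum.swap)
  also have "\<dots> = (\<Sum>i<n. \<Sum>j<n. y $ i * cnj (y $ j) * (\<Sum>k<n. M $$ (k,i) * cnj (M $$ (k,j))))"
    by (rule sum.cong[OF refl], rule sum.cong[OF refl]) (simp add: sum_distrib_left mult_ac)
  also have "\<dots> = (\<Sum>i<n. \<Sum>j<n. y $ i * cnj (y $ j) * cnj ((adj M * M) $$ (i,j)))"
  proof (intro sum.cong refl)
    fix i j assume "i \<in> {..<n}" "j \<in> {..<n}"
    then have "(adj M * M) $$ (i,j) = (\<Sum>k<n. cnj (M $$ (k,i)) * M $$ (k,j))"
      using M by (subst mult_index_sum[of _ n n _ n]) auto
    then show "y $ i * cnj (y $ j) * (\<Sum>k<n. M $$ (k,i) * cnj (M $$ (k,j))) =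
      y $ i * cnj (y $ j) * cnj ((adj M * M) $$ (i,j))" by (simp add: cnj_sum mult.commute)
  qed
  also have "\<dots> = (\<Sum>i<n. y $ i * cnj (y $ i) * complex_of_real (d i))"
    by (intro sum.cong refl) (simp add: D if_distrib cong: if_cong)
  also have "\<dots> = complex_of_real (\<Sum>i<n. d i * (cmod (y $ i))\<^sup>2)"
    unfolding of_real_sum by (intro sum.cong refl) (simp add: mul_cnj_sq mult.commute)
  finally show ?thesis by (simp only: of_real_eq_iff)
qed

definition colnorm :: "complex mat \<Rightarrow> nat \<Rightarrow> real" where
  "colnorm M i = sqrt (\<Sum>k<dim_row M. (cmod (M $$ (k,i)))\<^sup>2)"

lemma colnorm_nonneg: "0 \<le> colnorm M i"
  unfolding colnorm_def by (intro real_sqrt_ge_zero sum_nonneg) simp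

lemma colnorm_sq: "(colnorm M i)\<^sup>2 = (\<Sum>k<dim_row M. (cmod (M $$ (k,i)))\<^sup>2)"
proof -
  have "0 \<le> (\<Sum>k<dim_row M. (cmod (M $$ (k,i)))\<^sup>2)" by (intro sum_nonneg) simp
  then show ?thesis unfolding colnorm_def by simp
qed

lemma gram_diag_entry: assumes M: "M \<in> carrier_mat n n" and i: "i < n"
  shows "(adj M * M) $$ (i,i) = complex_of_real ((colnorm M i)\<^sup>2)"
proof -
  have "(adj M * M) $$ (i,i) = (\<Sum>k<n. cnj (M $$ (k,i)) * M $$ (k,i))"
    using M i by (subst mult_index_sum[of _ n n _ n]) auto
  also have "\<dots> = complex_of_real (\<Sum>k<n. (cmod (M $$ (k,i)))\<^sup>2)"
    unfolding of_real_sum by (intro sum.cong refl) (simp add: cnj_mult_self)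
  finally show ?thesis using M colnorm_sq[of M i] by simp
qed

lemma sum_list_singletons: "sum_list (map (\<lambda>a. {#a#}) L) = mset L"
  by (induction L) auto

lemma sum_mset_mset_upt: "(\<Sum>s\<in>#mset (map f [0..<N]). g s) = (\<Sum>i<N. g (f i))"
  by (induction N) (auto simp: add.commute)

lemma proots_linear_prod: "proots (\<Prod>a\<leftarrow>L. [:- a, 1:]) = mset (L :: complex list)"
proof (induction L)
  case (Cons a L)
  have nz: "(\<Prod>b\<leftarrow>L. [:- b, 1:]) \<noteq> (0 :: complex poly)" by (auto simp: prod_list_zero_iff)
  have pm: "proots ([:- a, 1:] * (\<Prod>b\<leftarrow>L. [:- b, 1:])) = proots [:- a, 1:] + proots (\<Prod>b\<leftarrow>L. [:- b, 1:])"
    by (rule proots_mult) (use nz in auto)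
  show ?case unfolding list.map prod_list.Cons pm Cons.IH by simp
qed simp

lemma svd:
  assumes A: "A \<in> carrier_mat N N"
  shows "\<exists>U\<in>carrier_mat N N. adj U * U = 1\<^sub>m N \<and> U * adj U = 1\<^sub>m N \<and>
     (\<forall>i<N. \<forall>j<N. i \<noteq> j \<longrightarrow> (adj (A * U) * (A * U)) $$ (i,j) = 0) \<and>
     singular_values A = mset (map (colnorm (A * U)) [0..<N])"
proof -
  define H where "H = adj A * A"
  have H: "H \<in> carrier_mat N N" unfolding H_def using A by (meson adj_carrier mult_carrier_mat)
  have herm: "adj H = H" unfolding H_def using adj_mult[of "adj A" N N A N] A by simp
  obtain U where U: "U \<in> carrier_mat N N" "adj U * U = 1\<^sub>m N" "diagonal_mat (adj U * H * U)"
    using spectral[OF H herm] by blast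
  have AU: "adj U \<in> carrier_mat N N" using U by simp
  have UU: "U * adj U = 1\<^sub>m N" by (rule mat_mult_left_right_inverse[OF AU U(1) U(2)])
  define G where "G = adj U * H * U"
  have G: "G \<in> carrier_mat N N" unfolding G_def using AU H U by (meson mult_carrier_mat)
  have Geq: "adj (A * U) * (A * U) = G"
  proof -
    have "adj (A * U) * (A * U) = (adj U * adj A) * (A * U)" using adj_mult[OF A U(1)] by simp
    also have "\<dots> = adj U * (adj A * A) * U" using A U(1) by (intro assoc4) auto
    finally show ?thesis unfolding G_def H_def .
  qed
  have offdiag: "\<forall>i<N. \<forall>j<N. i \<noteq> j \<longrightarrow> (adj (A * U) * (A * U)) $$ (i,j) = 0"
    using U(3) G unfolding Geq G_def[symmetric] diagonal_mat_def by auto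
  have Gii: "G $$ (i,i) = complex_of_real ((colnorm (A * U) i)\<^sup>2)" if "i < N" for i
    unfolding Geq[symmetric] using A U(1) that by (intro gram_diag_entry[of _ N]) auto
  have HG: "H = U * G * adj U"
  proof -
    have "U * G * adj U = (U * adj U) * H * (U * adj U)"
      unfolding G_def using U(1) AU H by (intro assoc5[symmetric]) auto
    also have "\<dots> = H" using UU H by simp
    finally show ?thesis by simp
  qed
  have sim: "similar_mat H G"
    unfolding similar_mat_def using similar_mat_witI[OF UU U(2) HG H G U(1) AU] by blast
  have ut: "upper_triangular G" using U(3) unfolding G_def[symmetric] diagonal_mat_def upper_triangular_def
    using G by auto
  have cp: "char_poly H = (\<Prod>a\<leftarrow>diag_mat G. [:- a, 1:])"
    using char_poly_similar[OF sim] char_poly_upper_triangular[OF G ut] by simp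
  have "proots (char_poly H) = mset (diag_mat G)" unfolding cp by (rule proots_linear_prod)
  then have pr: "proots (char_poly H) = mset (diag_mat G)" .
  have "singular_values A = image_mset (\<lambda>z. sqrt (Re z)) (mset (diag_mat G))"
    unfolding singular_values_def H_def[symmetric] pr ..
  also have "\<dots> = mset (map (\<lambda>i. sqrt (Re (G $$ (i,i)))) [0..<N])"
    unfolding diag_mat_def using G by (simp add: multiset.map_comp o_def)
  also have "map (\<lambda>i. sqrt (Re (G $$ (i,i)))) [0..<N] = map (colnorm (A * U)) [0..<N]"
    by (intro map_cong refl) (simp add: Gii colnorm_nonneg)
  finally show ?thesis using U(1) U(2) UU offdiag by blast
qed

lemma schatten1_formula:
  assumes "singular_values A = mset (map (colnorm B) [0..<N])"
  shows "schatten_norm 1 A = (\<Sum>i<N. colnorm B i)"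
proof -
  have "schatten_norm 1 A = (\<Sum>i<N. colnorm B i powr 1) powr 1"
    unfolding schatten_norm_def assms sum_mset_mset_upt by simp
  also have "\<dots> = (\<Sum>i<N. colnorm B i)"
  proof -
    have "0 \<le> (\<Sum>i<N. colnorm B i)" by (intro sum_nonneg colnorm_nonneg)
    then show ?thesis using colnorm_nonneg by simp
  qed
  finally show ?thesis .
qed

definition fro :: "nat \<Rightarrow> complex mat \<Rightarrow> real" where
  "fro N A = sqrt (\<Sum>i<N. \<Sum>k<N. (cmod (A $$ (k,i)))\<^sup>2)"

lemma schatten2_fro: assumes A: "A \<in> carrier_mat N N"
  shows "schatten_norm 2 A = fro N A"
proof -
  obtain U where U: "U \<in> carrier_mat N N" "adj U * U = 1\<^sub>m N" "U * adj U = 1\<^sub>m N"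
    and sv: "singular_values A = mset (map (colnorm (A * U)) [0..<N])"
    using svd[OF A] by blast
  have AU: "A * U \<in> carrier_mat N N" using A U by (meson mult_carrier_mat)
  have "schatten_norm 2 A = (\<Sum>i<N. colnorm (A * U) i powr 2) powr (1/2)"
    unfolding schatten_norm_def sv sum_mset_mset_upt by simp
  also have "\<dots> = sqrt (\<Sum>i<N. (colnorm (A * U) i)\<^sup>2)"
  proof -
    have "0 \<le> (\<Sum>i<N. (colnorm (A * U) i)\<^sup>2)" by (intro sum_nonneg) simp
    then show ?thesis using colnorm_nonneg by (simp add: powr_half_sqrt)
  qed
  also have "(\<Sum>i<N. (colnorm (A * U) i)\<^sup>2) = (\<Sum>i<N. \<Sum>k<N. (cmod ((A * U) $$ (k,i)))\<^sup>2)"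
    using A AU by (simp add: colnorm_sq)
  also have "\<dots> = Re (hs_inner (A * U) (A * U))" using hs_inner_self[OF AU] by simp
  also have "\<dots> = Re (hs_inner A A)" using hs_inner_unitary[OF A A U(1) U(3)] by simp
  also have "\<dots> = (\<Sum>i<N. \<Sum>k<N. (cmod (A $$ (k,i)))\<^sup>2)" using hs_inner_self[OF A] by simp
  finally show ?thesis unfolding fro_def .
qed

subsection \<open>Operator norm basics\<close>

lemma mat_vec_entry: "B \<in> carrier_mat n n \<Longrightarrow> x \<in> carrier_vec n \<Longrightarrow> k < n \<Longrightarrow>
   (B *\<^sub>v x) $ k = (\<Sum>l<n. B $$ (k,l) * x $ l)"
  by (auto simp: scalar_prod_def lessThan_atLeast0 intro!: sum.cong)

lemma op_vec_bound:
  assumes B: "B \<in> carrier_mat N N" and x: "x \<in> carrier_vec N"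
  shows "vec_norm2 (B *\<^sub>v x) \<le> sqrt (\<Sum>k<N. \<Sum>l<N. (cmod (B $$ (k,l)))\<^sup>2) * vec_norm2 x"
proof -
  define X where "X = (\<Sum>l<N. (cmod (x $ l))\<^sup>2)"
  have X0: "0 \<le> X" unfolding X_def by (intro sum_nonneg) simp
  have ent: "(cmod ((B *\<^sub>v x) $ k))\<^sup>2 \<le> (\<Sum>l<N. (cmod (B $$ (k,l)))\<^sup>2) * X" if k: "k < N" for k
  proof -
    have "cmod ((B *\<^sub>v x) $ k) = cmod (\<Sum>l<N. cnj (cnj (B $$ (k,l))) * x $ l)"
      using mat_vec_entry[OF B x k] by simp
    also have "\<dots> \<le> sqrt (\<Sum>l<N. (cmod (cnj (B $$ (k,l))))\<^sup>2) * sqrt X"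
      unfolding X_def by (rule cs_complex)
    finally have le: "cmod ((B *\<^sub>v x) $ k) \<le> sqrt (\<Sum>l<N. (cmod (B $$ (k,l)))\<^sup>2) * sqrt X" by simp
    have "(cmod ((B *\<^sub>v x) $ k))\<^sup>2 \<le> (sqrt (\<Sum>l<N. (cmod (B $$ (k,l)))\<^sup>2) * sqrt X)\<^sup>2"
      by (rule power_mono[OF le]) simp
    also have "\<dots> = (\<Sum>l<N. (cmod (B $$ (k,l)))\<^sup>2) * X"
      using X0 by (simp add: power_mult_distrib sum_nonneg)
    finally show ?thesis .
  qed
  have Bx: "B *\<^sub>v x \<in> carrier_vec N" using B x by simp
  have "vec_norm2 (B *\<^sub>v x) = sqrt (\<Sum>k<N. (cmod ((B *\<^sub>v x) $ k))\<^sup>2)" by (rule vec_norm2_sum[OF Bx])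
  also have "\<dots> \<le> sqrt (\<Sum>k<N. (\<Sum>l<N. (cmod (B $$ (k,l)))\<^sup>2) * X)"
    by (intro real_sqrt_le_mono sum_mono ent) simp
  also have "\<dots> = sqrt (\<Sum>k<N. \<Sum>l<N. (cmod (B $$ (k,l)))\<^sup>2) * sqrt X"
    by (simp only: sum_distrib_right[symmetric] real_sqrt_mult)
  also have "sqrt X = vec_norm2 x" unfolding X_def using vec_norm2_sum[OF x] by simp
  finally show ?thesis .
qed

abbreviation op_set :: "complex mat \<Rightarrow> real set" where
  "op_set A \<equiv> {vec_norm2 (A *\<^sub>v x) / vec_norm2 x | x. x \<in> carrier_vec (dim_col A) \<and> x \<noteq> 0\<^sub>v (dim_col A)}"

lemma op_set_bdd: assumes B: "B \<in> carrier_mat N N" shows "bdd_above (op_set B)"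
proof (rule bdd_aboveI, clarify)
  fix x :: "complex vec" assume x: "x \<in> carrier_vec (dim_col B)" "x \<noteq> 0\<^sub>v (dim_col B)"
  then have x': "x \<in> carrier_vec N" "x \<noteq> 0\<^sub>v N" using B by auto
  have pos: "0 < vec_norm2 x" by (rule vec_norm2_pos[OF x'])
  show "vec_norm2 (B *\<^sub>v x) / vec_norm2 x \<le> sqrt (\<Sum>k<N. \<Sum>l<N. (cmod (B $$ (k,l)))\<^sup>2)"
    using op_vec_bound[OF B x'(1)] pos by (simp add: divide_le_eq)
qed

lemma op_set_ne: assumes B: "B \<in> carrier_mat N N" and N: "N \<ge> 1" shows "op_set B \<noteq> {}"
proof -
  have "unit_vec N 0 \<noteq> (0\<^sub>v N :: complex vec)"
  proof
    assume "unit_vec N 0 = (0\<^sub>v N :: complex vec)"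
    then have "(unit_vec N 0 :: complex vec) $ 0 = (0\<^sub>v N :: complex vec) $ 0" by simp
    then show False using N by simp
  qed
  then show ?thesis using B by (auto intro!: exI[of _ "unit_vec N 0"])
qed

lemma op_norm_le_vec: assumes B: "B \<in> carrier_mat N N" and x: "x \<in> carrier_vec N"
  shows "vec_norm2 (B *\<^sub>v x) \<le> op_norm B * vec_norm2 x"
proof (cases "x = 0\<^sub>v N")
  case True
  have "B *\<^sub>v x = 0\<^sub>v N" using True B by auto
  then have "vec_norm2 (B *\<^sub>v x) = 0" by (simp add: vec_norm2_def)
  moreover have "vec_norm2 x = 0" using True by (simp add: vec_norm2_def)
  ultimately show ?thesis by simp
next
  case False
  have pos: "0 < vec_norm2 x" by (rule vec_norm2_pos[OF x False])
  have "vec_norm2 (B *\<^sub>v x) / vec_norm2 x \<le> op_norm B"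
    unfolding op_norm_def by (rule cSup_upper[OF _ op_set_bdd[OF B]]) (use x False B in auto)
  then show ?thesis using pos by (simp add: divide_le_eq)
qed

lemma op_norm_nonneg: assumes B: "B \<in> carrier_mat N N" and N: "N \<ge> 1" shows "0 \<le> op_norm B"
proof -
  obtain r where r: "r \<in> op_set B" using op_set_ne[OF B N] by blast
  have "0 \<le> r" using r by (auto intro!: divide_nonneg_nonneg vec_norm2_nonneg)
  also have "r \<le> op_norm B" unfolding op_norm_def by (rule cSup_upper[OF r op_set_bdd[OF B]])
  finally show ?thesis .
qed

lemma op_norm_le_const: assumes B: "B \<in> carrier_mat N N" and N: "N \<ge> 1"
  and c: "\<And>x. x \<in> carrier_vec N \<Longrightarrow> vec_norm2 (B *\<^sub>v x) \<le> c * vec_norm2 x"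
  shows "op_norm B \<le> c"
  unfolding op_norm_def
proof (rule cSup_least[OF op_set_ne[OF B N]], clarify)
  fix x :: "complex vec" assume x: "x \<in> carrier_vec (dim_col B)" "x \<noteq> 0\<^sub>v (dim_col B)"
  then have x': "x \<in> carrier_vec N" "x \<noteq> 0\<^sub>v N" using B by auto
  show "vec_norm2 (B *\<^sub>v x) / vec_norm2 x \<le> c"
    using c[OF x'(1)] vec_norm2_pos[OF x'] by (simp add: divide_le_eq)
qed

lemma colnorm_col: assumes M: "M \<in> carrier_mat n m" and i: "i < m"
  shows "colnorm M i = vec_norm2 (col M i)"
  using M i unfolding colnorm_def vec_norm2_def by simp

lemma colnorm_unitary: assumes U: "U \<in> carrier_mat n n" "adj U * U = 1\<^sub>m n" and k: "k < n"
  shows "colnorm U k = 1"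
proof -
  have "complex_of_real ((colnorm U k)\<^sup>2) = 1" using gram_diag_entry[OF U(1) k] U(2) k by simp
  then have "(colnorm U k)\<^sup>2 = 1" by (metis of_real_eq_1_iff)
  then show ?thesis using colnorm_nonneg[of U k] by (simp add: power2_eq_1_iff)
qed

lemma vec_cs: assumes v: "v \<in> carrier_vec n" and z: "z \<in> carrier_vec n"
  shows "cmod (\<Sum>a<n. cnj (v $ a) * z $ a) \<le> vec_norm2 v * vec_norm2 z"
  using cs_complex[where x="\<lambda>a. v $ a" and I="{..<n}" and y="\<lambda>a. z $ a"] vec_norm2_sum[OF v] vec_norm2_sum[OF z] by simp

lemma col_mult_vec: assumes B: "B \<in> carrier_mat n n" and U: "U \<in> carrier_mat n n" and i: "i < n"
  shows "col (B * U) i = B *\<^sub>v col U i"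
  by (rule col_mult2[OF B U i])

lemma holder:
  assumes A: "A \<in> carrier_mat N N" and B: "B \<in> carrier_mat N N"
  shows "cmod (hs_inner B A) \<le> op_norm B * schatten_norm 1 A"
proof -
  obtain U where U: "U \<in> carrier_mat N N" "adj U * U = 1\<^sub>m N" "U * adj U = 1\<^sub>m N"
    and sv: "singular_values A = mset (map (colnorm (A * U)) [0..<N])"
    using svd[OF A] by blast
  have AU: "A * U \<in> carrier_mat N N" and BU: "B * U \<in> carrier_mat N N"
    using A B U by (meson mult_carrier_mat)+
  have "cmod (hs_inner B A) = cmod (hs_inner (B * U) (A * U))"
    using hs_inner_unitary[OF B A U(1) U(3)] by simp
  also have "\<dots> \<le> (\<Sum>i<N. cmod (\<Sum>k<N. cnj ((B * U) $$ (k,i)) * (A * U) $$ (k,i)))"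
    unfolding hs_inner_sum[OF BU AU] by (rule norm_sum)
  also have "\<dots> \<le> (\<Sum>i<N. op_norm B * colnorm (A * U) i)"
  proof (rule sum_mono)
    fix i assume "i \<in> {..<N}"
    then have i: "i < N" by simp
    have "cmod (\<Sum>k<N. cnj ((B * U) $$ (k,i)) * (A * U) $$ (k,i)) \<le> colnorm (B * U) i * colnorm (A * U) i"
      using cs_complex[where x="\<lambda>k. (B * U) $$ (k,i)" and I="{..<N}" and y="\<lambda>k. (A * U) $$ (k,i)"] A B
      unfolding colnorm_def by simp
    also have "colnorm (B * U) i \<le> op_norm B"
    proof -
      have "colnorm (B * U) i = vec_norm2 (B *\<^sub>v col U i)"
        using colnorm_col[OF BU i] col_mult_vec[OF B U(1) i] by simp
      also have "\<dots> \<le> op_norm B * vec_norm2 (col U i)"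
        using U(1) i by (intro op_norm_le_vec[OF B]) auto
      also have "vec_norm2 (col U i) = 1"
        using colnorm_col[OF U(1) i] colnorm_unitary[OF U(1,2) i] by simp
      finally show ?thesis by simp
    qed
    then have "colnorm (B * U) i * colnorm (A * U) i \<le> op_norm B * colnorm (A * U) i"
      by (intro mult_right_mono colnorm_nonneg)
    finally show "cmod (\<Sum>k<N. cnj ((B * U) $$ (k,i)) * (A * U) $$ (k,i)) \<le> op_norm B * colnorm (A * U) i" .
  qed
  also have "\<dots> = op_norm B * schatten_norm 1 A"
    unfolding schatten1_formula[OF sv] by (simp add: sum_distrib_left)
  finally show ?thesis .
qed

lemma vec_norm2_sq: "v \<in> carrier_vec n \<Longrightarrow> (vec_norm2 v)\<^sup>2 = (\<Sum>k<n. (cmod (v $ k))\<^sup>2)"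
proof -
  assume v: "v \<in> carrier_vec n"
  have "0 \<le> (\<Sum>k<n. (cmod (v $ k))\<^sup>2)" by (intro sum_nonneg) simp
  then show ?thesis using vec_norm2_sum[OF v] by simp
qed

lemma unitary_norm: assumes U: "U \<in> carrier_mat n n" "U * adj U = 1\<^sub>m n" and x: "x \<in> carrier_vec n"
  shows "vec_norm2 (adj U *\<^sub>v x) = vec_norm2 x"
proof -
  have AU: "adj U \<in> carrier_mat n n" using U by simp
  have "(vec_norm2 (adj U *\<^sub>v x))\<^sup>2 = (\<Sum>i<n. 1 * (cmod (x $ i))\<^sup>2)"
    by (rule norm_mult_diag[OF AU x]) (use U in simp)
  also have "\<dots> = (vec_norm2 x)\<^sup>2" using vec_norm2_sq[OF x] by simp
  finally show ?thesis using vec_norm2_nonneg by (simp add: power2_eq_iff_nonneg)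
qed

lemma gram_entry: assumes M: "M \<in> carrier_mat n n" and i: "i < n" and j: "j < n"
  shows "(adj M * M) $$ (i,j) = (\<Sum>k<n. cnj (M $$ (k,i)) * M $$ (k,j))"
  using M i j by (subst mult_index_sum[of _ n n _ n]) auto

definition normcols :: "nat \<Rightarrow> complex mat \<Rightarrow> complex mat" where
  "normcols N W = mat N N (\<lambda>(k,i). if colnorm W i = 0 then 0 else W $$ (k,i) / complex_of_real (colnorm W i))"

lemma normcols_gram:
  assumes W: "W \<in> carrier_mat N N" and offd: "\<forall>i<N. \<forall>j<N. i \<noteq> j \<longrightarrow> (adj W * W) $$ (i,j) = 0"
    and i: "i < N" and j: "j < N"
  shows "(adj (normcols N W) * normcols N W) $$ (i,j) =
     (if i = j then complex_of_real (if colnorm W i = 0 then 0 else 1) else 0)"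
proof -
  define V where "V = normcols N W"
  define s where "s = colnorm W"
  have V: "V \<in> carrier_mat N N" unfolding V_def normcols_def by simp
  have "(adj V * V) $$ (i,j) = (\<Sum>k<N. cnj (V $$ (k,i)) * V $$ (k,j))" by (rule gram_entry[OF V i j])
  also have "\<dots> = (if s i = 0 \<or> s j = 0 then 0 else
      (\<Sum>k<N. cnj (W $$ (k,i)) * W $$ (k,j)) / complex_of_real (s i * s j))"
    unfolding sum_divide_distrib using i j by (auto simp: V_def normcols_def s_def intro!: sum.cong)
  also have "\<dots> = (if i = j then complex_of_real (if s i = 0 then 0 else 1) else 0)"
  proof -
    have g: "(\<Sum>k<N. cnj (W $$ (k,i)) * W $$ (k,j)) = (adj W * W) $$ (i,j)" by (rule gram_entry[OF W i j, symmetric])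
    { assume z: "s i = 0 \<or> s j = 0"
      have ?thesis
      proof (cases "i = j")
        case True then show ?thesis using z by simp
      qed (use z in simp) }
    moreover
    { assume nz: "\<not> (s i = 0 \<or> s j = 0)"
      have ?thesis
      proof (cases "i = j")
        case True
        have "(adj W * W) $$ (i,i) = complex_of_real ((s i)\<^sup>2)" unfolding s_def by (rule gram_diag_entry[OF W i])
        then show ?thesis using True nz g by (simp add: power2_eq_square)
      next
        case False
        then show ?thesis using nz g offd i j by simp
      qed }
    ultimately show ?thesis by blast
  qed
  finally show ?thesis unfolding V_def s_def .
qed

lemma att_S1:
  assumes N: "N \<ge> 1" and A: "A \<in> carrier_mat N N"
  shows "\<exists>B\<in>carrier_mat N N. op_norm B \<le> 1 \<and> schatten_norm 1 A \<le> cmod (hs_inner B A)"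
proof -
  obtain U where U: "U \<in> carrier_mat N N" "adj U * U = 1\<^sub>m N" "U * adj U = 1\<^sub>m N"
    and offd: "\<forall>i<N. \<forall>j<N. i \<noteq> j \<longrightarrow> (adj (A * U) * (A * U)) $$ (i,j) = 0"
    and sv: "singular_values A = mset (map (colnorm (A * U)) [0..<N])"
    using svd[OF A] by blast
  define W where "W = A * U"
  have W: "W \<in> carrier_mat N N" unfolding W_def using A U by (meson mult_carrier_mat)
  have AU: "adj U \<in> carrier_mat N N" using U by simp
  define \<sigma> where "\<sigma> i = colnorm W i" for i
  have Wdiag: "(adj W * W) $$ (i,i) = complex_of_real ((\<sigma> i)\<^sup>2)" if "i < N" for i
    unfolding \<sigma>_def by (rule gram_diag_entry[OF W that])
  define V where "V = mat N N (\<lambda>(k,i). if \<sigma> i = 0 then 0 else W $$ (k,i) / complex_of_real (\<sigma> i))"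
  have V: "V \<in> carrier_mat N N" unfolding V_def by simp
  define B where "B = V * adj U"
  have B: "B \<in> carrier_mat N N" unfolding B_def using V AU by (meson mult_carrier_mat)
  have BU: "B * U = V"
  proof -
    have "B * U = V * (adj U * U)" unfolding B_def using V AU U(1) by (rule assoc_mult_mat)
    then show ?thesis using U(2) V by simp
  qed
  have col_i: "(\<Sum>k<N. cnj (V $$ (k,i)) * W $$ (k,i)) = complex_of_real (\<sigma> i)" if i: "i < N" for i
  proof (cases "\<sigma> i = 0")
    case True
    then show ?thesis using i unfolding V_def by simp
  next
    case False
    have "(\<Sum>k<N. cnj (V $$ (k,i)) * W $$ (k,i)) = (\<Sum>k<N. cnj (W $$ (k,i)) * W $$ (k,i)) / complex_of_real (\<sigma> i)"
      unfolding sum_divide_distrib using i False by (intro sum.cong refl) (auto simp: V_def)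
    also have "(\<Sum>k<N. cnj (W $$ (k,i)) * W $$ (k,i)) = complex_of_real ((\<sigma> i)\<^sup>2)"
      using Wdiag[OF i] gram_entry[OF W i i] by simp
    finally show ?thesis using False by (simp add: power2_eq_square)
  qed
  have inner: "hs_inner B A = complex_of_real (\<Sum>i<N. \<sigma> i)"
  proof -
    have "hs_inner B A = hs_inner (B * U) (A * U)" using hs_inner_unitary[OF B A U(1) U(3)] by simp
    also have "\<dots> = hs_inner V W" unfolding BU W_def ..
    also have "\<dots> = (\<Sum>i<N. complex_of_real (\<sigma> i))"
      unfolding hs_inner_sum[OF V W] by (intro sum.cong refl) (simp add: col_i)
    finally show ?thesis by simp
  qed
  have S1: "schatten_norm 1 A = (\<Sum>i<N. \<sigma> i)"
    unfolding \<sigma>_def W_def by (rule schatten1_formula[OF sv])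
  have S1le: "schatten_norm 1 A \<le> cmod (hs_inner B A)" unfolding inner S1 norm_of_real by simp
  define d where "d i = (if \<sigma> i = 0 then 0 else 1 :: real)" for i
  have Vgram: "(adj V * V) $$ (i,j) = (if i = j then complex_of_real (d i) else 0)"
    if i: "i < N" and j: "j < N" for i j
    using normcols_gram[OF W _ i j] offd unfolding V_def normcols_def d_def \<sigma>_def W_def by simp
  have opB: "op_norm B \<le> 1"
  proof (rule op_norm_le_const[OF B N])
    fix x :: "complex vec" assume x: "x \<in> carrier_vec N"
    define y where "y = adj U *\<^sub>v x"
    have y: "y \<in> carrier_vec N" unfolding y_def using AU x by simp
    have Bx: "B *\<^sub>v x = V *\<^sub>v y" unfolding B_def y_def using V AU x by (rule assoc_mult_mat_vec)
    have "(vec_norm2 (V *\<^sub>v y))\<^sup>2 = (\<Sum>i<N. d i * (cmod (y $ i))\<^sup>2)"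
      by (rule norm_mult_diag[OF V y Vgram])
    also have "\<dots> \<le> (\<Sum>i<N. (cmod (y $ i))\<^sup>2)" by (intro sum_mono) (auto simp: d_def)
    also have "\<dots> = (vec_norm2 y)\<^sup>2" using vec_norm2_sq[OF y] by simp
    also have "vec_norm2 y = vec_norm2 x" unfolding y_def by (rule unitary_norm[OF U(1) U(3) x])
    finally have "(vec_norm2 (B *\<^sub>v x))\<^sup>2 \<le> (vec_norm2 x)\<^sup>2" unfolding Bx .
    then have "vec_norm2 (B *\<^sub>v x) \<le> vec_norm2 x" by (rule power2_le_imp_le[OF _ vec_norm2_nonneg])
    then show "vec_norm2 (B *\<^sub>v x) \<le> 1 * vec_norm2 x" by simp
  qed
  show ?thesis using B opB S1le by blast
qed

definition rank1 :: "nat \<Rightarrow> complex vec \<Rightarrow> complex vec \<Rightarrow> complex mat" where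
  "rank1 N v u = mat N N (\<lambda>(a,b). v $ a * cnj (u $ b))"

lemma rank1_carrier[simp]: "rank1 N v u \<in> carrier_mat N N"
  unfolding rank1_def by simp

lemma hs_inner_rank1:
  assumes Z: "Z \<in> carrier_mat N N" and u: "u \<in> carrier_vec N"
  shows "hs_inner (rank1 N v u) Z = (\<Sum>a<N. cnj (v $ a) * (Z *\<^sub>v u) $ a)"
proof -
  have "hs_inner (rank1 N v u) Z = (\<Sum>b<N. \<Sum>a<N. cnj (v $ a) * (Z $$ (a,b) * u $ b))"
    unfolding hs_inner_sum[OF rank1_carrier Z] by (intro sum.cong refl) (auto simp: rank1_def mult_ac)
  also have "\<dots> = (\<Sum>a<N. \<Sum>b<N. cnj (v $ a) * (Z $$ (a,b) * u $ b))" by (rule sum.swap)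
  also have "\<dots> = (\<Sum>a<N. cnj (v $ a) * (Z *\<^sub>v u) $ a)"
    by (intro sum.cong refl) (simp add: mat_vec_entry[OF Z u] sum_distrib_left)
  finally show ?thesis .
qed

lemma att_op:
  assumes N: "N \<ge> 1" and Y: "Y \<in> carrier_mat N N"
  shows "\<exists>A\<in>carrier_mat N N. schatten_norm 1 A \<le> 1 \<and> op_norm Y \<le> cmod (hs_inner A Y)"
proof -
  obtain U where U: "U \<in> carrier_mat N N" "adj U * U = 1\<^sub>m N" "U * adj U = 1\<^sub>m N"
    and offd: "\<forall>i<N. \<forall>j<N. i \<noteq> j \<longrightarrow> (adj (Y * U) * (Y * U)) $$ (i,j) = 0"
    using svd[OF Y] by blast
  define W where "W = Y * U"
  have W: "W \<in> carrier_mat N N" unfolding W_def using Y U by (meson mult_carrier_mat)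
  have AU: "adj U \<in> carrier_mat N N" using U by simp
  define \<sigma> where "\<sigma> i = colnorm W i" for i
  have fin: "finite (\<sigma> ` {..<N})" by simp
  have ne: "\<sigma> ` {..<N} \<noteq> {}" using N by (simp add: lessThan_empty_iff)
  obtain k where k: "k < N" "\<sigma> k = Max (\<sigma> ` {..<N})"
    using Max_in[OF fin ne] by auto
  have kmax: "\<sigma> i \<le> \<sigma> k" if "i < N" for i
    unfolding k(2) using that fin by (intro Max_ge) auto
  have sk0: "0 \<le> \<sigma> k" unfolding \<sigma>_def by (rule colnorm_nonneg)
  have Wgram: "(adj W * W) $$ (i,j) = (if i = j then complex_of_real ((\<sigma> i)\<^sup>2) else 0)"
    if "i < N" "j < N" for i j
    using gram_diag_entry[OF W] offd that unfolding \<sigma>_def W_def by auto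
  have WU: "W * adj U = Y"
  proof -
    have "W * adj U = Y * (U * adj U)" unfolding W_def using Y U(1) AU by (rule assoc_mult_mat)
    then show ?thesis using U(3) Y by simp
  qed
  have opY: "op_norm Y \<le> \<sigma> k"
  proof (rule op_norm_le_const[OF Y N])
    fix x :: "complex vec" assume x: "x \<in> carrier_vec N"
    define y where "y = adj U *\<^sub>v x"
    have y: "y \<in> carrier_vec N" unfolding y_def using AU x by simp
    have Yx: "Y *\<^sub>v x = W *\<^sub>v y" unfolding y_def WU[symmetric] using W AU x by (rule assoc_mult_mat_vec)
    have "(vec_norm2 (W *\<^sub>v y))\<^sup>2 = (\<Sum>i<N. (\<sigma> i)\<^sup>2 * (cmod (y $ i))\<^sup>2)"
      by (rule norm_mult_diag[OF W y Wgram])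
    also have "\<dots> \<le> (\<Sum>i<N. (\<sigma> k)\<^sup>2 * (cmod (y $ i))\<^sup>2)"
    proof (intro sum_mono mult_right_mono)
      fix i assume "i \<in> {..<N}"
      then show "(\<sigma> i)\<^sup>2 \<le> (\<sigma> k)\<^sup>2" using kmax unfolding \<sigma>_def
        by (intro power_mono) (auto simp: colnorm_nonneg)
    qed simp
    also have "\<dots> = (\<sigma> k)\<^sup>2 * (vec_norm2 y)\<^sup>2" using vec_norm2_sq[OF y] by (simp add: sum_distrib_left)
    also have "vec_norm2 y = vec_norm2 x" unfolding y_def by (rule unitary_norm[OF U(1) U(3) x])
    finally have "(vec_norm2 (Y *\<^sub>v x))\<^sup>2 \<le> (\<sigma> k * vec_norm2 x)\<^sup>2" unfolding Yx by (simp add: power_mult_distrib)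
    then show "vec_norm2 (Y *\<^sub>v x) \<le> \<sigma> k * vec_norm2 x"
      by (rule power2_le_imp_le[OF _ mult_nonneg_nonneg[OF sk0 vec_norm2_nonneg]])
  qed
  define u where "u = col U k"
  define v where "v = vec N (\<lambda>a. W $$ (a,k) / complex_of_real (\<sigma> k))"
  have u: "u \<in> carrier_vec N" unfolding u_def by (rule col_carrier_vec[OF k(1) U(1)])
  have v: "v \<in> carrier_vec N" unfolding v_def by simp
  have nu: "vec_norm2 u = 1" unfolding u_def using colnorm_col[OF U(1) k(1)] colnorm_unitary[OF U(1,2) k(1)] by simp
  have colsq: "(\<Sum>a<N. (cmod (W $$ (a,k)))\<^sup>2) = (\<sigma> k)\<^sup>2"
    unfolding \<sigma>_def using colnorm_sq[of W k] W by simp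
  have nv: "vec_norm2 v \<le> 1"
  proof -
    have "(vec_norm2 v)\<^sup>2 = (\<Sum>a<N. (cmod (W $$ (a,k)))\<^sup>2 / (\<sigma> k)\<^sup>2)"
      unfolding vec_norm2_sq[OF v] by (intro sum.cong refl) (simp add: v_def norm_divide power_divide)
    also have "\<dots> = (\<sigma> k)\<^sup>2 / (\<sigma> k)\<^sup>2" unfolding sum_divide_distrib[symmetric] colsq ..
    also have "\<dots> \<le> 1" by simp
    finally have "(vec_norm2 v)\<^sup>2 \<le> 1\<^sup>2" by simp
    then show ?thesis by (rule power2_le_imp_le) simp
  qed
  define R where "R = rank1 N v u"
  have R: "R \<in> carrier_mat N N" unfolding R_def by simp
  have Yu: "Y *\<^sub>v u = col W k" unfolding u_def W_def by (rule col_mult2[OF Y U(1) k(1), symmetric])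
  have inner: "hs_inner R Y = complex_of_real (\<sigma> k)"
  proof -
    have "hs_inner R Y = (\<Sum>a<N. cnj (v $ a) * (Y *\<^sub>v u) $ a)" unfolding R_def by (rule hs_inner_rank1[OF Y u])
    also have "\<dots> = (\<Sum>a<N. cnj (W $$ (a,k)) * W $$ (a,k)) / complex_of_real (\<sigma> k)"
      unfolding sum_divide_distrib Yu using W k(1) by (intro sum.cong refl) (simp add: v_def)
    also have "(\<Sum>a<N. cnj (W $$ (a,k)) * W $$ (a,k)) = complex_of_real ((\<sigma> k)\<^sup>2)"
      unfolding of_real_sum colsq[symmetric] by (intro sum.cong refl) (simp add: cnj_mult_self)
    finally show ?thesis by (simp add: power2_eq_square)
  qed
  have S1R: "schatten_norm 1 R \<le> 1"
  proof -
    obtain B where B: "B \<in> carrier_mat N N" "op_norm B \<le> 1" "schatten_norm 1 R \<le> cmod (hs_inner B R)"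
      using att_S1[OF N R] by blast
    have "cmod (hs_inner B R) = cmod (hs_inner R B)" by (rule hs_inner_cmod_sym[OF R B(1)])
    also have "\<dots> = cmod (\<Sum>a<N. cnj (v $ a) * (B *\<^sub>v u) $ a)" unfolding R_def hs_inner_rank1[OF B(1) u] ..
    also have "\<dots> \<le> vec_norm2 v * vec_norm2 (B *\<^sub>v u)" using B(1) u by (intro vec_cs[OF v]) simp
    also have "\<dots> \<le> 1 * (op_norm B * 1)"
    proof (intro mult_mono nv)
      show "vec_norm2 (B *\<^sub>v u) \<le> op_norm B * 1" using op_norm_le_vec[OF B(1) u] nu by simp
    qed (use vec_norm2_nonneg op_norm_nonneg[OF B(1) N] in auto)
    also have "\<dots> \<le> 1" using B(2) by simp
    finally show ?thesis using B(3) by simp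
  qed
  have "op_norm Y \<le> cmod (hs_inner R Y)" unfolding inner norm_of_real using opY sk0 by simp
  then show ?thesis using R S1R by blast
qed

lemma fro_nonneg: "0 \<le> fro N A"
  unfolding fro_def by (intro real_sqrt_ge_zero sum_nonneg) simp

lemma fro_sq: "(fro N A)\<^sup>2 = (\<Sum>i<N. \<Sum>k<N. (cmod (A $$ (k,i)))\<^sup>2)"
proof -
  have "0 \<le> (\<Sum>i<N. \<Sum>k<N. (cmod (A $$ (k,i)))\<^sup>2)" by (intro sum_nonneg) simp
  then show ?thesis unfolding fro_def by simp
qed

lemma fro_holder:
  assumes A: "A \<in> carrier_mat N N" and B: "B \<in> carrier_mat N N"
  shows "cmod (hs_inner A B) \<le> fro N A * fro N B"
proof -
  have "cmod (hs_inner A B) \<le> (\<Sum>i<N. \<Sum>k<N. cmod (A $$ (k,i)) * cmod (B $$ (k,i)))"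
    by (rule hs_inner_le[OF A B])
  also have "\<dots> = (\<Sum>p\<in>{..<N}\<times>{..<N}. cmod (A $$ (snd p, fst p)) * cmod (B $$ (snd p, fst p)))"
    by (simp add: sum.cartesian_product split_def)
  also have "\<dots> \<le> sqrt (\<Sum>p\<in>{..<N}\<times>{..<N}. (cmod (A $$ (snd p, fst p)))\<^sup>2) *
                    sqrt (\<Sum>p\<in>{..<N}\<times>{..<N}. (cmod (B $$ (snd p, fst p)))\<^sup>2)"
    by (rule cs_sqrt)
  also have "\<dots> = fro N A * fro N B" unfolding fro_def by (simp add: sum.cartesian_product split_def)
  finally show ?thesis .
qed

lemma fro_att:
  assumes X: "X \<in> carrier_mat N N"
  shows "\<exists>B\<in>carrier_mat N N. fro N B \<le> 1 \<and> fro N X \<le> cmod (hs_inner B X)"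
proof -
  define f where "f = fro N X"
  define B where "B = mat N N (\<lambda>(k,i). X $$ (k,i) / complex_of_real f)"
  have B: "B \<in> carrier_mat N N" unfolding B_def by simp
  have f0: "0 \<le> f" unfolding f_def by (rule fro_nonneg)
  have "hs_inner B X = (\<Sum>i<N. \<Sum>k<N. cnj (X $$ (k,i)) * X $$ (k,i)) / complex_of_real f"
    unfolding hs_inner_sum[OF B X] sum_divide_distrib
    by (intro sum.cong refl) (simp add: B_def)
  also have "(\<Sum>i<N. \<Sum>k<N. cnj (X $$ (k,i)) * X $$ (k,i)) = hs_inner X X" by (rule hs_inner_sum[OF X X, symmetric])
  also have "\<dots> = complex_of_real (f\<^sup>2)" unfolding hs_inner_self[OF X] f_def fro_sq ..
  finally have inner: "hs_inner B X = complex_of_real f" by (simp add: power2_eq_square)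
  have "(fro N B)\<^sup>2 = (\<Sum>i<N. \<Sum>k<N. (cmod (X $$ (k,i)))\<^sup>2 / f\<^sup>2)"
    unfolding fro_sq by (intro sum.cong refl) (simp add: B_def norm_divide power_divide)
  also have "\<dots> = f\<^sup>2 / f\<^sup>2" unfolding sum_divide_distrib[symmetric] f_def fro_sq ..
  also have "\<dots> \<le> 1" by simp
  finally have "(fro N B)\<^sup>2 \<le> 1\<^sup>2" by simp
  then have "fro N B \<le> 1" by (rule power2_le_imp_le) simp
  moreover have "fro N X \<le> cmod (hs_inner B X)" unfolding inner norm_of_real f_def using fro_nonneg by simp
  ultimately show ?thesis using B by blast
qed

theorem proposition4p2:
  fixes N :: nat and T Tadj :: "complex mat \<Rightarrow> complex mat"
  assumes "N \<ge> 1"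
    and "linear_on_M N T"
    and "\<exists>A\<in>carrier_mat N N. T A \<noteq> 0\<^sub>m N N"
    and "is_hs_adjoint N T Tadj"
  shows "height N T = height N Tadj"
proof -
  have N: "N \<ge> 1" by fact
  have adj: "is_hs_adjoint N T Tadj" by fact
  have Tc: "\<And>X. X \<in> carrier_mat N N \<Longrightarrow> T X \<in> carrier_mat N N"
    using assms(2) unfolding linear_on_M_def by blast
  have S1nn: "\<And>X. X \<in> carrier_mat N N \<Longrightarrow> 0 \<le> schatten_norm 1 X"
    unfolding schatten_norm_def by simp
  have S2nn: "\<And>X. X \<in> carrier_mat N N \<Longrightarrow> 0 \<le> schatten_norm 2 X"
    unfolding schatten_norm_def by simp
  have opnn: "\<And>X. X \<in> carrier_mat N N \<Longrightarrow> 0 \<le> op_norm X"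
    using op_norm_nonneg N by blast
  have H1: "\<And>A B. A \<in> carrier_mat N N \<Longrightarrow> B \<in> carrier_mat N N \<Longrightarrow>
      cmod (hs_inner A B) \<le> schatten_norm 1 A * op_norm B"
    using holder hs_inner_cmod_sym by (metis mult.commute)
  have H2: "\<And>A B. A \<in> carrier_mat N N \<Longrightarrow> B \<in> carrier_mat N N \<Longrightarrow>
      cmod (hs_inner A B) \<le> op_norm A * schatten_norm 1 B"
    using holder by blast
  have H3: "\<And>A B. A \<in> carrier_mat N N \<Longrightarrow> B \<in> carrier_mat N N \<Longrightarrow>
      cmod (hs_inner A B) \<le> schatten_norm 2 A * schatten_norm 2 B"
    using fro_holder schatten2_fro by metis
  have At3: "\<And>X. X \<in> carrier_mat N N \<Longrightarrow>
      \<exists>B\<in>carrier_mat N N. schatten_norm 2 B \<le> 1 \<and> schatten_norm 2 X \<le> cmod (hs_inner B X)"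
  proof -
    fix X :: "complex mat" assume X: "X \<in> carrier_mat N N"
    obtain B where B: "B \<in> carrier_mat N N" "fro N B \<le> 1" "fro N X \<le> cmod (hs_inner B X)"
      using fro_att[OF X] by blast
    have "schatten_norm 2 B \<le> 1" using B(2) schatten2_fro[OF B(1)] by simp
    moreover have "schatten_norm 2 X \<le> cmod (hs_inner B X)" using B(3) schatten2_fro[OF X] by simp
    ultimately show "\<exists>B\<in>carrier_mat N N. schatten_norm 2 B \<le> 1 \<and> schatten_norm 2 X \<le> cmod (hs_inner B X)"
      using B(1) by blast
  qed
  have e1: "induced_norm N (schatten_norm 1) Tadj = induced_norm N op_norm T"
    by (rule induced_adjoint_generic[OF N Tc adj S1nn opnn H1]) (use att_S1[OF N] att_op[OF N] in auto)
  have e2: "induced_norm N op_norm Tadj = induced_norm N (schatten_norm 1) T"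
    by (rule induced_adjoint_generic[OF N Tc adj opnn S1nn H2]) (use att_S1[OF N] att_op[OF N] in auto)
  have e3: "induced_norm N (schatten_norm 2) Tadj = induced_norm N (schatten_norm 2) T"
    by (rule induced_adjoint_generic[OF N Tc adj S2nn S2nn H3 At3 At3])
  show ?thesis unfolding height_def e1 e2 e3 by (simp add: mult.commute)
qed

end
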